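(* Let $\ell\ge2$, $\rho\in(-\frac{1}{\ell-1},1)$, $m\in\{1,\dots,\ell\}$ and $\gamma>0$. Let $X=(X_1,\dots,X_\ell)^T$ be zero-mean Gaussian with covariance matrix having all diagonal entries $1$ and all off-diagonal entries $\rho$. For each $m$-subset $\mathcal{S}$ of $\{1,\dots,\ell\}$ let $U^+_{\mathcal{S}}(\gamma)=\sum_{i\in\mathcal{S}}X_i+\sqrt\gamma N^+_{\mathcal{S}}$, where the $N^+_{\mathcal{S}}$ are zero-mean unit-variance Gaussian random variables, and $X$ and all $N^+_{\mathcal{S}}$ are mutually independent. Using the conventions $\binom{\ell-2}{\ell-1}=0$ and $\binom{\ell-2}{-1}=0$, set \begin{align*} \eta_1&=\tbinom{\ell-1}{m-1}\tbinom{\ell-2}{m-1}m(1-\rho)(1+(\ell-1)\rho),\\ \eta_2&=\tbinom{\ell-1}{m-1}(1+(m-1)\rho)+\tbinom{\ell-2}{m-1}m(1+(\ell-2)\rho)+\tbinom{\ell-2}{m-2}((\ell-1)m\rho+(m-1)(1-\rho)),\\ \eta_3&=\tbinom{\ell-1}{m-1}(1+(m-1)\rho)+\tbinom{\ell-2}{m-1}(\ell-1)m\rho^2+\tbinom{\ell-2}{m-2}(\ell-1)\rho(1+(m-1)\rho),\\ \eta_4&=\tbinom{\ell-1}{m-1}\rho(1+(m-1)\rho)+\tbinom{\ell-2}{m-1}m\rho(1+(\ell-2)\rho)+\tbinom{\ell-2}{m-2}(1+(\ell-2)\rho)(1+(m-1)\rho). \end{align*} Then the error covariance matrix $\mathbb{E}[(X-\mathbb{E}[X|\omega])(X-\mathbb{E}[X|\omega])^T]$,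 where $\omega=(U^+_{\mathcal{S}}(\gamma):|\mathcal{S}|=m)$, has all diagonal entries equal to \[ d^+(\gamma)=1-\frac{\eta_3\gamma+\eta_1}{\gamma^2+\eta_2\gamma+\eta_1} \] and all off-diagonal entries equal to \[ \theta^+(\gamma)=\rho-\frac{\eta_4\gamma+\eta_1\rho}{\gamma^2+\eta_2\gamma+\eta_1}. \] *)

theory Defs
  imports "HOL-Probability.Probability"
begin

definition cbinom :: "int \<Rightarrow> int \<Rightarrow> real" where
  "cbinom n k = (if k < 0 \<or> n < 0 then 0 else real (nat n choose nat k))"

definition rv_sets :: "'a measure \<Rightarrow> 'i set \<Rightarrow> ('i \<Rightarrow> 'a \<Rightarrow> real) \<Rightarrow> 'a set set" where
  "rv_sets M I f = (\<Union>i\<in>I. {f i -` A \<inter> space M | A. A \<in> sets borel})"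

definition jointly_gaussian ::
  "'a measure \<Rightarrow> 'i set \<Rightarrow> ('i \<Rightarrow> 'a \<Rightarrow> real) \<Rightarrow> ('i \<Rightarrow> real) \<Rightarrow> ('i \<Rightarrow> 'i \<Rightarrow> real) \<Rightarrow> bool" where
  "jointly_gaussian M I X mu C \<longleftrightarrow>
     (\<forall>i\<in>I. X i \<in> borel_measurable M) \<and>
     (\<forall>c. let v = (\<Sum>i\<in>I. \<Sum>j\<in>I. c i * c j * C i j);
              e = (\<Sum>i\<in>I. c i * mu i);
              Y = (\<lambda>\<omega>. \<Sum>i\<in>I. c i * X i \<omega>)
          in (v > 0 \<longrightarrow> distributed M lborel Y (normal_density e (sqrt v))) \<and>
             (v = 0 \<longrightarrow> (AE \<omega> in M. Y \<omega> = e)))"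

end

theory Submission
  imports Defs "HOL-Real_Asymp.Real_Asymp"
begin

inductive tp :: "'i set \<Rightarrow> (('i \<Rightarrow> real) \<Rightarrow> real) \<Rightarrow> bool" for I where
  tcos: "tp I (\<lambda>x. cos (\<Sum>a\<in>I. s a * x a))"
| tsin: "tp I (\<lambda>x. sin (\<Sum>a\<in>I. s a * x a))"
| tadd: "tp I f \<Longrightarrow> tp I g \<Longrightarrow> tp I (\<lambda>x. f x + g x)"
| tscale: "tp I f \<Longrightarrow> tp I (\<lambda>x. c * f x)"

lemma lin_add: fixes s t x :: "'i \<Rightarrow> real" shows "(\<Sum>a\<in>I. s a * x a) + (\<Sum>a\<in>I. t a * x a) = (\<Sum>a\<in>I. (s a + t a) * x a)"
  by (simp add: sum.distrib distrib_right)
lemma lin_diff: fixes s t x :: "'i \<Rightarrow> real" shows "(\<Sum>a\<in>I. s a * x a) - (\<Sum>a\<in>I. t a * x a) = (\<Sum>a\<in>I. (s a - t a) * x a)"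
  by (simp add: sum_subtractf left_diff_distrib)

lemma tp_sub: "tp I f \<Longrightarrow> tp I g \<Longrightarrow> tp I (\<lambda>x. f x - g x)"
proof -
  assume "tp I f" "tp I g"
  then have "tp I (\<lambda>x. f x + (-1) * g x)" by (intro tadd tscale)
  then show ?thesis by simp
qed

lemma tp_half: "tp I f \<Longrightarrow> tp I (\<lambda>x. f x / 2)"
proof -
  assume "tp I f"
  then have "tp I (\<lambda>x. (1/2) * f x)" by (rule tscale)
  then show ?thesis by simp
qed

lemma tp_base_mult:
  shows "tp I (\<lambda>x. cos (\<Sum>a\<in>I. s a * x a) * cos (\<Sum>a\<in>I. t a * x a))"
    and "tp I (\<lambda>x. cos (\<Sum>a\<in>I. s a * x a) * sin (\<Sum>a\<in>I. t a * x a))"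
    and "tp I (\<lambda>x. sin (\<Sum>a\<in>I. s a * x a) * cos (\<Sum>a\<in>I. t a * x a))"
    and "tp I (\<lambda>x. sin (\<Sum>a\<in>I. s a * x a) * sin (\<Sum>a\<in>I. t a * x a))"
  unfolding cos_times_cos cos_times_sin sin_times_cos sin_times_sin lin_add lin_diff
  by (intro tp_half tadd tp_sub tcos tsin)+

lemma tp_mult_cos: "tp I g \<Longrightarrow> tp I (\<lambda>x. cos (\<Sum>a\<in>I. s a * x a) * g x)"
proof (induction rule: tp.induct)
  case (tadd f g)
  have "tp I (\<lambda>x. cos (\<Sum>a\<in>I. s a * x a) * f x + cos (\<Sum>a\<in>I. s a * x a) * g x)" by (rule tp.tadd[OF tadd.IH])
  then show ?case by (simp add: distrib_left)
next
  case (tscale f c)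
  have "tp I (\<lambda>x. c * (cos (\<Sum>a\<in>I. s a * x a) * f x))" by (rule tp.tscale[OF tscale.IH])
  then show ?case by (simp add: ac_simps)
qed (rule tp_base_mult)+

lemma tp_mult_sin: "tp I g \<Longrightarrow> tp I (\<lambda>x. sin (\<Sum>a\<in>I. s a * x a) * g x)"
proof (induction rule: tp.induct)
  case (tadd f g)
  have "tp I (\<lambda>x. sin (\<Sum>a\<in>I. s a * x a) * f x + sin (\<Sum>a\<in>I. s a * x a) * g x)" by (rule tp.tadd[OF tadd.IH])
  then show ?case by (simp add: distrib_left)
next
  case (tscale f c)
  have "tp I (\<lambda>x. c * (sin (\<Sum>a\<in>I. s a * x a) * f x))" by (rule tp.tscale[OF tscale.IH])
  then show ?case by (simp add: ac_simps)
qed (rule tp_base_mult)+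

lemma tp_mult: "tp I f \<Longrightarrow> tp I g \<Longrightarrow> tp I (\<lambda>x. f x * g x)"
proof (induction rule: tp.induct)
  case (tadd f h)
  then have "tp I (\<lambda>x. f x * g x + h x * g x)" by (intro tp.tadd)
  then show ?case by (simp add: distrib_right)
next
  case (tscale f c)
  then have "tp I (\<lambda>x. c * (f x * g x))" by (intro tp.tscale)
  then show ?case by (simp add: ac_simps)
qed (auto intro: tp_mult_cos tp_mult_sin)

lemma tp_const: "tp I (\<lambda>x. c)"
proof -
  have "tp I (\<lambda>x. c * cos (\<Sum>a\<in>I. 0 * x a))" by (intro tscale tcos)
  then show ?thesis by simp
qed

lemma tp_sin_coord: "a \<in> I \<Longrightarrow> finite I \<Longrightarrow> tp I (\<lambda>x. sin (x a / k))"
proof -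
  assume "a \<in> I" "finite I"
  have "tp I (\<lambda>x. sin (\<Sum>b\<in>I. (if b = a then 1/k else 0) * x b))" by (rule tsin)
  moreover have "(\<Sum>b\<in>I. (if b = a then 1/k else 0) * x b) = x a / k" for x
  proof -
    have "(\<Sum>b\<in>I. (if b = a then 1/k else 0) * x b) = (\<Sum>b\<in>I. if b = a then x a / k else 0)"
      by (intro sum.cong) auto
    also have "\<dots> = x a / k" using \<open>a \<in> I\<close> \<open>finite I\<close> by simp
    finally show ?thesis .
  qed
  ultimately show ?thesis by simp
qed

lemma tp_poly:
  assumes "real_polynomial_function p" "tp I g"
  shows "tp I (\<lambda>x. p (g x))"
  using assms(1)
proof (induction rule: real_polynomial_function.induct)
  case (linear f)
  then obtain c where "f = (\<lambda>x. x * c)" by (auto simp: real_bounded_linear)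
  then show ?case using tscale[OF assms(2), of c] by (simp add: ac_simps)
next
  case (const c) show ?case by (rule tp_const)
next
  case (add f1 g1) show ?case by (rule tadd[OF add.IH])
next
  case (mult f1 g1) show ?case by (rule tp_mult[OF mult.IH])
qed

lemma tp_prod: "finite J \<Longrightarrow> (\<And>a. a \<in> J \<Longrightarrow> tp I (f a)) \<Longrightarrow> tp I (\<lambda>x. \<Prod>a\<in>J. f a x)"
proof (induction J rule: finite_induct)
  case empty then show ?case by (simp add: tp_const)
next
  case (insert a J) then show ?case by (simp add: tp_mult)
qed

lemma integrable_mult_bdd:
  fixes Z g :: "'a \<Rightarrow> real"
  assumes "integrable M Z" "g \<in> borel_measurable M" "\<And>\<omega>. \<omega> \<in> space M \<Longrightarrow> \<bar>g \<omega>\<bar> \<le> B"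
  shows "integrable M (\<lambda>\<omega>. Z \<omega> * g \<omega>)"
proof (rule Bochner_Integration.integrable_bound[where f="\<lambda>\<omega>. B * Z \<omega>"])
  show "integrable M (\<lambda>\<omega>. B * Z \<omega>)" using assms(1) by simp
  show "(\<lambda>\<omega>. Z \<omega> * g \<omega>) \<in> borel_measurable M"
    using assms(1,2) by (intro borel_measurable_times) auto
  show "AE \<omega> in M. norm (Z \<omega> * g \<omega>) \<le> norm (B * Z \<omega>)"
  proof (rule AE_I2)
    fix \<omega> assume "\<omega> \<in> space M"
    then have "\<bar>g \<omega>\<bar> \<le> \<bar>B\<bar>" using assms(3)[of \<omega>] by linarith
    then have "\<bar>Z \<omega>\<bar> * \<bar>g \<omega>\<bar> \<le> \<bar>Z \<omega>\<bar> * \<bar>B\<bar>" by (rule mult_left_mono) auto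
    then show "norm (Z \<omega> * g \<omega>) \<le> norm (B * Z \<omega>)"
      by (simp add: abs_mult ac_simps)
  qed
qed

lemma dct_zero:
  fixes Z g :: "'a \<Rightarrow> real" and s :: "nat \<Rightarrow> 'a \<Rightarrow> real"
  assumes Z: "integrable M Z" and sm: "\<And>n. s n \<in> borel_measurable M" and gm: "g \<in> borel_measurable M"
    and bnd: "\<And>n \<omega>. \<omega> \<in> space M \<Longrightarrow> \<bar>s n \<omega>\<bar> \<le> B"
    and lim: "\<And>\<omega>. \<omega> \<in> space M \<Longrightarrow> (\<lambda>n. s n \<omega>) \<longlonglongrightarrow> g \<omega>"
    and zero: "\<And>n. (\<integral>\<omega>. Z \<omega> * s n \<omega> \<partial>M) = 0"
  shows "(\<integral>\<omega>. Z \<omega> * g \<omega> \<partial>M) = 0"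
proof -
  have Zm: "Z \<in> borel_measurable M" using Z by auto
  have "(\<lambda>n. \<integral>\<omega>. Z \<omega> * s n \<omega> \<partial>M) \<longlonglongrightarrow> (\<integral>\<omega>. Z \<omega> * g \<omega> \<partial>M)"
  proof (rule integral_dominated_convergence[where w="\<lambda>\<omega>. \<bar>B\<bar> * \<bar>Z \<omega>\<bar>"])
    show "(\<lambda>\<omega>. Z \<omega> * g \<omega>) \<in> borel_measurable M" using Zm gm by (intro borel_measurable_times)
    show "(\<lambda>\<omega>. Z \<omega> * s n \<omega>) \<in> borel_measurable M" for n using Zm sm by (intro borel_measurable_times)
    show "integrable M (\<lambda>\<omega>. \<bar>B\<bar> * \<bar>Z \<omega>\<bar>)" using Z by auto
    show "AE \<omega> in M. (\<lambda>n. Z \<omega> * s n \<omega>) \<longlonglongrightarrow> Z \<omega> * g \<omega>"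
      by (rule AE_I2) (intro tendsto_mult_left lim)
    show "AE \<omega> in M. norm (Z \<omega> * s n \<omega>) \<le> \<bar>B\<bar> * \<bar>Z \<omega>\<bar>" for n
    proof (rule AE_I2)
      fix \<omega> assume "\<omega> \<in> space M"
      then have "\<bar>s n \<omega>\<bar> \<le> \<bar>B\<bar>" using bnd[of \<omega> n] by linarith
      then have "\<bar>Z \<omega>\<bar> * \<bar>s n \<omega>\<bar> \<le> \<bar>Z \<omega>\<bar> * \<bar>B\<bar>" by (rule mult_left_mono) auto
      then show "norm (Z \<omega> * s n \<omega>) \<le> \<bar>B\<bar> * \<bar>Z \<omega>\<bar>"
        by (simp add: abs_mult ac_simps)
    qed
  qed
  then show ?thesis using zero by (simp add: LIMSEQ_const_iff)
qed

context
  fixes M :: "'a measure" and I :: "'i set" and V :: "'i \<Rightarrow> 'a \<Rightarrow> real" and Z :: "'a \<Rightarrow> real"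
  assumes fin: "finite I"
    and Vm: "\<And>a. a \<in> I \<Longrightarrow> V a \<in> borel_measurable M"
    and Zi: "integrable M Z"
    and hcos: "\<And>s. (\<integral>\<omega>. Z \<omega> * cos (\<Sum>a\<in>I. s a * V a \<omega>) \<partial>M) = 0"
    and hsin: "\<And>s. (\<integral>\<omega>. Z \<omega> * sin (\<Sum>a\<in>I. s a * V a \<omega>) \<partial>M) = 0"
begin

lemma lin_meas: "(\<lambda>\<omega>. \<Sum>a\<in>I. s a * V a \<omega>) \<in> borel_measurable M"
  using Vm by (intro borel_measurable_sum borel_measurable_times) auto

lemma tp_meas: "tp I f \<Longrightarrow> (\<lambda>\<omega>. f (\<lambda>a. V a \<omega>)) \<in> borel_measurable M"
proof (induction rule: tp.induct)
  case (tcos s) show ?case using lin_meas[of s] by measurable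
next
  case (tsin s) show ?case using lin_meas[of s] by measurable
next
  case (tadd f g) then show ?case by (intro borel_measurable_add)
next
  case (tscale f c) then show ?case by (intro borel_measurable_times) auto
qed

lemma tp_bdd: "tp I f \<Longrightarrow> \<exists>B. \<forall>x. \<bar>f x\<bar> \<le> B"
proof (induction rule: tp.induct)
  case (tcos s) show ?case by (intro exI[of _ 1]) auto
next
  case (tsin s) show ?case by (intro exI[of _ 1]) auto
next
  case (tadd f g)
  then obtain B1 B2 where "\<forall>x. \<bar>f x\<bar> \<le> B1" "\<forall>x. \<bar>g x\<bar> \<le> B2" by auto
  then show ?case by (intro exI[of _ "B1 + B2"]) (auto intro: abs_triangle_ineq[THEN order_trans] add_mono)
next
  case (tscale f c)
  then obtain B where "\<forall>x. \<bar>f x\<bar> \<le> B" by auto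
  then show ?case by (intro exI[of _ "\<bar>c\<bar> * B"]) (auto simp: abs_mult intro: mult_left_mono)
qed

lemma tp_int: "tp I f \<Longrightarrow> (\<integral>\<omega>. Z \<omega> * f (\<lambda>a. V a \<omega>) \<partial>M) = 0"
proof (induction rule: tp.induct)
  case (tcos s) show ?case by (rule hcos)
next
  case (tsin s) show ?case by (rule hsin)
next
  case (tadd f g)
  obtain B1 where "\<forall>x. \<bar>f x\<bar> \<le> B1" using tp_bdd[OF tadd.hyps(1)] by auto
  then have i1: "integrable M (\<lambda>\<omega>. Z \<omega> * f (\<lambda>a. V a \<omega>))"
    by (intro integrable_mult_bdd[OF Zi tp_meas[OF tadd.hyps(1)]]) auto
  obtain B2 where "\<forall>x. \<bar>g x\<bar> \<le> B2" using tp_bdd[OF tadd.hyps(2)] by auto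
  then have i2: "integrable M (\<lambda>\<omega>. Z \<omega> * g (\<lambda>a. V a \<omega>))"
    by (intro integrable_mult_bdd[OF Zi tp_meas[OF tadd.hyps(2)]]) auto
  have "(\<integral>\<omega>. Z \<omega> * (f (\<lambda>a. V a \<omega>) + g (\<lambda>a. V a \<omega>)) \<partial>M)
      = (\<integral>\<omega>. Z \<omega> * f (\<lambda>a. V a \<omega>) + Z \<omega> * g (\<lambda>a. V a \<omega>) \<partial>M)"
    by (simp add: distrib_left)
  also have "\<dots> = 0" using i1 i2 tadd.IH by simp
  finally show ?case .
next
  case (tscale f c)
  have "(\<integral>\<omega>. Z \<omega> * (c * f (\<lambda>a. V a \<omega>)) \<partial>M) = c * (\<integral>\<omega>. Z \<omega> * f (\<lambda>a. V a \<omega>) \<partial>M)"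
    by (simp add: ac_simps)
  then show ?case using tscale.IH by simp
qed

lemma step1:
  assumes gc: "\<And>a. continuous_on UNIV (g a)" and gb: "\<And>a y. \<bar>g a y\<bar> \<le> 1"
  shows "(\<integral>\<omega>. Z \<omega> * (\<Prod>a\<in>I. g a (sin (V a \<omega> / k))) \<partial>M) = 0"
proof -
  have "\<forall>an. \<exists>p. real_polynomial_function p \<and> (\<forall>y\<in>{-1..1}. \<bar>g (fst an) y - p y\<bar> < 1 / real (Suc (snd an)))"
  proof
    fix an :: "'i \<times> nat"
    have "continuous_on {-1..1} (g (fst an))" using gc continuous_on_subset by blast
    then obtain p where "real_polynomial_function p" "\<And>x. x \<in> {-1..1::real} \<Longrightarrow> \<bar>g (fst an) x - p x\<bar> < 1 / real (Suc (snd an))"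
      using Stone_Weierstrass_real_polynomial_function[of "{-1..1::real}" "g (fst an)" "1 / real (Suc (snd an))"] by auto
    then show "\<exists>p. real_polynomial_function p \<and> (\<forall>y\<in>{-1..1}. \<bar>g (fst an) y - p y\<bar> < 1 / real (Suc (snd an)))" by blast
  qed
  then obtain P where P: "\<And>an. real_polynomial_function (P an) \<and> (\<forall>y\<in>{-1..1}. \<bar>g (fst an) y - P an y\<bar> < 1 / real (Suc (snd an)))"
    by metis
  define s where "s = (\<lambda>n \<omega>. (\<Prod>a\<in>I. P (a,n) (sin (V a \<omega> / k))))"
  have tps: "tp I (\<lambda>x. \<Prod>a\<in>I. P (a,n) (sin (x a / k)))" for n
    using fin by (intro tp_prod tp_poly[OF conjunct1[OF P]] tp_sin_coord) auto
  have sin_in: "sin y \<in> {-1..1}" for y :: real by (auto simp: sin_ge_minus_one sin_le_one)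
  show ?thesis
  proof (rule dct_zero[OF Zi, where s=s and B="2^card I"])
    show "s n \<in> borel_measurable M" for n
      using tp_meas[OF tps[of n]] by (simp add: s_def)
    show "(\<lambda>\<omega>. \<Prod>a\<in>I. g a (sin (V a \<omega> / k))) \<in> borel_measurable M"
    proof -
      have "(\<lambda>\<omega>. sin (V a \<omega> / k)) \<in> borel_measurable M" if "a \<in> I" for a
        using Vm[OF that] by measurable
      then show ?thesis by (intro borel_measurable_prod borel_measurable_continuous_on[OF gc])
    qed
    show "\<bar>s n \<omega>\<bar> \<le> 2 ^ card I" for n \<omega>
    proof -
      have "\<bar>P (a,n) (sin (V a \<omega> / k))\<bar> \<le> 2" for a
      proof -
        have "\<bar>g a (sin (V a \<omega> / k)) - P (a,n) (sin (V a \<omega> / k))\<bar> < 1"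
        proof -
          have "\<bar>g a (sin (V a \<omega> / k)) - P (a,n) (sin (V a \<omega> / k))\<bar> < 1 / real (Suc n)"
            using P[of "(a,n)"] sin_in[of "V a \<omega> / k"] by auto
          also have "\<dots> \<le> 1" by (simp add: divide_le_eq_1)
          finally show ?thesis .
        qed
        then show ?thesis using gb[of a "sin (V a \<omega> / k)"] by linarith
      qed
      then have "(\<Prod>a\<in>I. \<bar>P (a,n) (sin (V a \<omega> / k))\<bar>) \<le> (\<Prod>a\<in>I. 2)"
        by (intro prod_mono) auto
      then show ?thesis by (simp add: s_def abs_prod)
    qed
    show "(\<lambda>n. s n \<omega>) \<longlonglongrightarrow> (\<Prod>a\<in>I. g a (sin (V a \<omega> / k)))" for \<omega>
      unfolding s_def
    proof (intro tendsto_prod)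
      fix a
      let ?y = "sin (V a \<omega> / k)"
      have "(\<lambda>n. P (a,n) ?y - g a ?y) \<longlonglongrightarrow> 0"
      proof (rule LIMSEQ_norm_0)
        fix n
        show "norm (P (a,n) ?y - g a ?y) < 1 / real (Suc n)"
          using P[of "(a,n)"] sin_in[of "V a \<omega> / k"] by (simp add: abs_minus_commute)
      qed
      from tendsto_add[OF this tendsto_const[of "g a ?y"]]
      show "(\<lambda>n. P (a,n) ?y) \<longlonglongrightarrow> g a ?y" by simp
    qed
    show "(\<integral>\<omega>. Z \<omega> * s n \<omega> \<partial>M) = 0" for n
      using tp_int[OF tps[of n]] by (simp add: s_def)
  qed
qed

lemma step2:
  assumes hc: "\<And>a. continuous_on UNIV (h a)" and hb: "\<And>a y. \<bar>h a y\<bar> \<le> 1"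
  shows "(\<integral>\<omega>. Z \<omega> * (\<Prod>a\<in>I. h a (V a \<omega>)) \<partial>M) = 0"
proof -
  define s where "s n \<omega> = (\<Prod>a\<in>I. h a (real (Suc n) * sin (V a \<omega> / real (Suc n))))" for n \<omega>
  have hm: "(\<lambda>\<omega>. h a (f \<omega>)) \<in> borel_measurable M" if "f \<in> borel_measurable M" for a f
    by (rule borel_measurable_continuous_on[OF hc that])
  show ?thesis
  proof (rule dct_zero[OF Zi, where s=s and B=1])
    show "s n \<in> borel_measurable M" for n
    proof -
      have "(\<lambda>\<omega>. real (Suc n) * sin (V a \<omega> / real (Suc n))) \<in> borel_measurable M" if "a \<in> I" for a
        using Vm[OF that] by measurable
      then show ?thesis unfolding s_def by (intro borel_measurable_prod hm)
    qed
    show "(\<lambda>\<omega>. \<Prod>a\<in>I. h a (V a \<omega>)) \<in> borel_measurable M"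
      using Vm by (intro borel_measurable_prod hm) auto
    show "\<bar>s n \<omega>\<bar> \<le> 1" for n \<omega>
    proof -
      have "(\<Prod>a\<in>I. \<bar>h a (real (Suc n) * sin (V a \<omega> / real (Suc n)))\<bar>) \<le> (\<Prod>a\<in>I. 1)"
        using hb by (intro prod_mono) auto
      then show ?thesis by (simp add: s_def abs_prod)
    qed
    show "(\<lambda>n. s n \<omega>) \<longlonglongrightarrow> (\<Prod>a\<in>I. h a (V a \<omega>))" for \<omega>
      unfolding s_def
    proof (intro tendsto_prod)
      fix a
      have "(\<lambda>n. real (Suc n) * sin (V a \<omega> / real (Suc n))) \<longlonglongrightarrow> V a \<omega>"
        by real_asymp
      moreover have "isCont (h a) (V a \<omega>)" using hc by (simp add: continuous_on_eq_continuous_at)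
      ultimately show "(\<lambda>n. h a (real (Suc n) * sin (V a \<omega> / real (Suc n)))) \<longlonglongrightarrow> h a (V a \<omega>)"
        by (rule isCont_tendsto_compose[rotated])
    qed
    show "(\<integral>\<omega>. Z \<omega> * s n \<omega> \<partial>M) = 0" for n
      unfolding s_def
      by (rule step1[of "\<lambda>a y. h a (real (Suc n) * y)" "real (Suc n)"])
         (auto intro!: continuous_intros continuous_on_compose2[OF hc] simp: hb)
  qed
qed

lemma step3:
  "(\<integral>\<omega>. Z \<omega> * (\<Prod>a\<in>I. indicator {..c a} (V a \<omega>)) \<partial>M) = 0"
proof -
  define h where "h j a y = max 0 (min 1 (1 - real j * (y - c a)))" for j a and y :: real
  have hc: "continuous_on UNIV (h j a)" for j a unfolding h_def by (intro continuous_intros)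
  have hb: "\<bar>h j a y\<bar> \<le> 1" for j a y unfolding h_def by auto
  have lim: "(\<lambda>j. h j a y) \<longlonglongrightarrow> indicator {..c a} y" for a y
  proof (cases "y \<le> c a")
    case True
    then have "h j a y = 1" for j unfolding h_def by (auto simp: mult_nonneg_nonpos)
    then show ?thesis using True by simp
  next
    case False
    then have pos: "y - c a > 0" by simp
    obtain N :: nat where N: "1 / (y - c a) < N" using reals_Archimedean2 by blast
    have "eventually (\<lambda>j. h j a y = 0) sequentially"
      unfolding eventually_sequentially
    proof (intro exI allI impI)
      fix j assume "N \<le> j"
      then have "1 / (y - c a) < real j" using N by linarith
      then have "1 < real j * (y - c a)" using pos by (simp add: field_simps)
      then show "h j a y = 0" unfolding h_def by auto
    qed
    then have "(\<lambda>j. h j a y) \<longlonglongrightarrow> 0" by (rule tendsto_eventually)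
    then show ?thesis using False by simp
  qed
  show ?thesis
  proof (rule dct_zero[OF Zi, where s="\<lambda>j \<omega>. \<Prod>a\<in>I. h j a (V a \<omega>)" and B=1])
    show "(\<lambda>\<omega>. \<Prod>a\<in>I. h j a (V a \<omega>)) \<in> borel_measurable M" for j
      using Vm by (intro borel_measurable_prod borel_measurable_continuous_on[OF hc]) auto
    show "(\<lambda>\<omega>. \<Prod>a\<in>I. indicator {..c a} (V a \<omega>) :: real) \<in> borel_measurable M"
      using Vm by (intro borel_measurable_prod) measurable
    show "\<bar>\<Prod>a\<in>I. h j a (V a \<omega>)\<bar> \<le> 1" for j \<omega>
    proof -
      have "(\<Prod>a\<in>I. \<bar>h j a (V a \<omega>)\<bar>) \<le> (\<Prod>a\<in>I. 1)"
        using hb by (intro prod_mono) auto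
      then show ?thesis by (simp add: abs_prod)
    qed
    show "(\<lambda>j. \<Prod>a\<in>I. h j a (V a \<omega>)) \<longlonglongrightarrow> (\<Prod>a\<in>I. indicator {..c a} (V a \<omega>))" for \<omega>
      by (intro tendsto_prod lim)
    show "(\<integral>\<omega>. Z \<omega> * (\<Prod>a\<in>I. h j a (V a \<omega>)) \<partial>M) = 0" for j
      by (rule step2[OF hc hb])
  qed
qed

lemma Z_int0: "(\<integral>\<omega>. Z \<omega> \<partial>M) = 0"
  using hcos[of "\<lambda>_. 0"] by simp

lemma KL_ind:
  assumes A: "A \<in> sigma_sets (space M) (rv_sets M I V)"
  shows "(\<integral>\<omega>. indicator A \<omega> * Z \<omega> \<partial>M) = 0"
proof -
  let ?\<Omega> = "space M"
  define G where "G = range (\<lambda>c. {\<omega>\<in>space M. \<forall>a\<in>I. V a \<omega> \<le> c a})"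
  have Gsets: "G \<subseteq> sets M"
  proof
    fix X assume "X \<in> G"
    then obtain c where X: "X = {\<omega>\<in>space M. \<forall>a\<in>I. V a \<omega> \<le> c a}" by (auto simp: G_def)
    have "{\<omega>\<in>space M. V a \<omega> \<le> c a} \<in> sets M" if "a \<in> I" for a
      using Vm[OF that] by measurable
    then show "X \<in> sets M" unfolding X by (intro sets.sets_Collect_finite_All fin) auto
  qed
  have Gpow: "G \<subseteq> Pow ?\<Omega>" by (auto simp: G_def)
  have Gint: "Int_stable G"
  proof (rule Int_stableI)
    fix X Y assume "X \<in> G" "Y \<in> G"
    then obtain c d where X: "X = {\<omega>\<in>space M. \<forall>a\<in>I. V a \<omega> \<le> c a}"
      and Y: "Y = {\<omega>\<in>space M. \<forall>a\<in>I. V a \<omega> \<le> d a}" by (auto simp: G_def)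
    have "X \<inter> Y = {\<omega>\<in>space M. \<forall>a\<in>I. V a \<omega> \<le> min (c a) (d a)}" by (auto simp: X Y)
    then show "X \<inter> Y \<in> G"
      using rangeI[of "\<lambda>c. {\<omega>\<in>space M. \<forall>a\<in>I. V a \<omega> \<le> c a}" "\<lambda>a. min (c a) (d a)"]
      by (simp add: G_def)
  qed
  have sp: "space (sigma ?\<Omega> G) = ?\<Omega>" and st: "sets (sigma ?\<Omega> G) = sigma_sets ?\<Omega> G"
    using Gpow by auto
  have rvsub: "rv_sets M I V \<subseteq> sigma_sets ?\<Omega> G"
  proof
    fix X assume "X \<in> rv_sets M I V"
    then obtain a B where a: "a \<in> I" and B: "B \<in> sets borel" and X: "X = V a -` B \<inter> ?\<Omega>"
      by (auto simp: rv_sets_def)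
    have "V a \<in> borel_measurable (sigma ?\<Omega> G)"
    proof (rule borel_measurableI_le)
      fix y
      have eq: "{x \<in> ?\<Omega>. V a x \<le> y} = (\<Union>j::nat. {\<omega>\<in>?\<Omega>. \<forall>b\<in>I. V b \<omega> \<le> (if b = a then y else real j)})"
      proof safe
        fix x assume x: "x \<in> ?\<Omega>" "V a x \<le> y"
        obtain j :: nat where j: "(\<Sum>b\<in>I. \<bar>V b x\<bar>) \<le> real j" using real_arch_simple by blast
        have "V b x \<le> real j" if "b \<in> I" for b
        proof -
          have "V b x \<le> \<bar>V b x\<bar>" by simp
          also have "\<dots> \<le> (\<Sum>b\<in>I. \<bar>V b x\<bar>)" using that fin by (intro member_le_sum) auto
          finally show ?thesis using j by linarith
        qed
        then show "x \<in> (\<Union>j::nat. {\<omega>\<in>?\<Omega>. \<forall>b\<in>I. V b \<omega> \<le> (if b = a then y else real j)})"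
          using x by auto
      next
        fix x j assume "x \<in> ?\<Omega>" "\<forall>b\<in>I. V b x \<le> (if b = a then y else real j)"
        then show "V a x \<le> y" using a by force
      qed
      have "{\<omega>\<in>?\<Omega>. \<forall>b\<in>I. V b \<omega> \<le> (if b = a then y else real j)} \<in> G" for j
        unfolding G_def by (rule rangeI)
      then have "(\<Union>j::nat. {\<omega>\<in>?\<Omega>. \<forall>b\<in>I. V b \<omega> \<le> (if b = a then y else real j)}) \<in> sigma_sets ?\<Omega> G"
        by (intro sigma_sets.Union) (auto intro: sigma_sets.Basic)
      then show "{x \<in> space (sigma ?\<Omega> G). V a x \<le> y} \<in> sets (sigma ?\<Omega> G)"
        unfolding sp st eq .
    qed
    from measurable_sets[OF this B] show "X \<in> sigma_sets ?\<Omega> G" unfolding X sp st .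
  qed
  have A': "A \<in> sigma_sets ?\<Omega> G"
    using sigma_sets_mono[OF rvsub] A by blast
  have sig_sub: "sigma_sets ?\<Omega> G \<subseteq> sets M"
    using sets.sigma_sets_subset[OF Gsets] .
  have Zm: "Z \<in> borel_measurable M" using Zi by auto
  from Gint Gpow A' show ?thesis
  proof (induction rule: sigma_sets_induct_disjoint)
    case (basic X)
    then obtain c where X: "X = {\<omega>\<in>space M. \<forall>a\<in>I. V a \<omega> \<le> c a}" by (auto simp: G_def)
    have "(\<integral>\<omega>. indicator X \<omega> * Z \<omega> \<partial>M) = (\<integral>\<omega>. Z \<omega> * (\<Prod>a\<in>I. indicator {..c a} (V a \<omega>)) \<partial>M)"
    proof (rule Bochner_Integration.integral_cong)
      fix \<omega> assume \<omega>: "\<omega> \<in> space M"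
      show "indicator X \<omega> * Z \<omega> = Z \<omega> * (\<Prod>a\<in>I. indicator {..c a} (V a \<omega>))"
      proof (cases "\<forall>a\<in>I. V a \<omega> \<le> c a")
        case True
        then have "(\<Prod>a\<in>I. indicator {..c a} (V a \<omega>) :: real) = (\<Prod>a\<in>I. 1)"
          by (intro prod.cong) auto
        then show ?thesis using True \<omega> by (simp add: X)
      next
        case False
        then obtain a where "a \<in> I" "\<not> V a \<omega> \<le> c a" by auto
        then have "(\<Prod>a\<in>I. indicator {..c a} (V a \<omega>) :: real) = 0"
          using fin by (intro prod_zero bexI[of _ a]) (auto simp: indicator_def)
        then show ?thesis using False \<omega> by (simp add: X)
      qed
    qed simp
    then show ?case using step3 by simp
  next
    case empty then show ?case by simp
  next
    case (compl X)
    have Xs: "X \<in> sets M" using compl.hyps sig_sub by auto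
    have "(\<integral>\<omega>. indicator (?\<Omega> - X) \<omega> * Z \<omega> \<partial>M) = (\<integral>\<omega>. Z \<omega> - indicator X \<omega> * Z \<omega> \<partial>M)"
      by (rule Bochner_Integration.integral_cong) (auto simp: indicator_def)
    also have "\<dots> = (\<integral>\<omega>. Z \<omega> \<partial>M) - (\<integral>\<omega>. indicator X \<omega> * Z \<omega> \<partial>M)"
      using Zi integrable_mult_indicator[OF Xs Zi] by (intro Bochner_Integration.integral_diff) simp_all
    finally show ?case using compl.IH Z_int0 by simp
  next
    case (union F)
    have Fs: "F i \<in> sets M" for i using union.hyps(2) sig_sub by auto
    have "(LINT x:(\<Union>i. F i)|M. Z x) = (\<Sum>i. (LINT x:(F i)|M. Z x))"
    proof (rule lebesgue_integral_countable_add)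
      show "F i \<inter> F j = {}" if "i \<noteq> j" for i j using union.hyps(1) that by (auto simp: disjoint_family_on_def)
      show "set_integrable M (\<Union>i. F i) Z" unfolding set_integrable_def
        using Zi Fs by (intro integrable_mult_indicator) auto
    qed (rule Fs)
    then show ?case using union.IH by (simp add: set_lebesgue_integral_def)
  qed
qed

lemma KL:
  assumes "A \<in> sigma_sets (space M) (rv_sets M I V)"
  shows "(\<integral>\<omega>\<in>A. Z \<omega> \<partial>M) = 0"
  using KL_ind[OF assms] by (simp add: set_lebesgue_integral_def)

end

lemma final_algebra:
  fixes a b c N \<rho> \<gamma> l m :: real
  assumes bc: "b + c = a" and bl: "(l - 1) * b = (m - 1) * a" and la: "l * a = m * N"
    and l2: "l \<ge> 2" and m1: "m \<ge> 1" and rl: "1 + (l - 1) * \<rho> > 0" and r1: "\<rho> < 1" and g: "\<gamma> > 0"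
    and a0: "a > 0" and c0: "c \<ge> 0"
  defines "\<alpha> \<equiv> (1 - \<rho>) / ((1 - \<rho>) * c + \<gamma>)"
  defines "\<beta> \<equiv> (m * \<rho> - \<alpha> * ((1 - \<rho>) * m * b + m^2 * \<rho> * a)) / ((1 - \<rho>) * m * a + m^2 * \<rho> * N + \<gamma>)"
  defines "\<eta>1 \<equiv> a * c * m * (1 - \<rho>) * (1 + (l - 1) * \<rho>)"
    and "\<eta>2 \<equiv> a * (1 + (m - 1) * \<rho>) + c * m * (1 + (l - 2) * \<rho>) + b * ((l - 1) * m * \<rho> + (m - 1) * (1 - \<rho>))"
    and "\<eta>3 \<equiv> a * (1 + (m - 1) * \<rho>) + c * (l - 1) * m * \<rho>\<^sup>2 + b * (l - 1) * \<rho> * (1 + (m - 1) * \<rho>)"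
    and "\<eta>4 \<equiv> a * \<rho> * (1 + (m - 1) * \<rho>) + c * m * \<rho> * (1 + (l - 2) * \<rho>) + b * (1 + (l - 2) * \<rho>) * (1 + (m - 1) * \<rho>)"
  shows "1 - \<alpha> * (1 - \<rho>) * a - \<alpha> * m * \<rho> * a - \<beta> * (1 - \<rho>) * a - \<beta> * m * \<rho> * N
           = 1 - (\<eta>3 * \<gamma> + \<eta>1) / (\<gamma>\<^sup>2 + \<eta>2 * \<gamma> + \<eta>1)"
    and "\<rho> - \<alpha> * (1 - \<rho>) * b - \<alpha> * m * \<rho> * a - \<beta> * (1 - \<rho>) * a - \<beta> * m * \<rho> * N
           = \<rho> - (\<eta>4 * \<gamma> + \<eta>1 * \<rho>) / (\<gamma>\<^sup>2 + \<eta>2 * \<gamma> + \<eta>1)"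
proof -
  have l1: "l - 1 > 0" using l2 by simp
  have m0: "m > 0" using m1 by simp
  define t where "t = a / (l - 1)"
  have A: "a = (l - 1) * t" using l1 by (simp add: t_def)
  have B: "b = (m - 1) * t" using bl l1 by (simp add: t_def field_simps)
  have C: "c = (l - m) * t" using bc A B by (simp add: algebra_simps)
  have mN: "m * N = l * (l - 1) * t" using la A by simp
  define P1 where "P1 = (1 - \<rho>) * c + \<gamma>"
  define P2 where "P2 = m * a * (1 + (l - 1) * \<rho>) + \<gamma>"
  define K where "K = (1 - \<rho>) * m * b + m^2 * \<rho> * a"
  define T where "T = (1 - \<rho>) * a + \<rho> * (m * N)"
  have d1: "P1 > 0" using r1 c0 g unfolding P1_def by (simp add: add_nonneg_pos)
  have e2: "(1 - \<rho>) * m * a + m^2 * \<rho> * N = m * a * (1 + (l - 1) * \<rho>)"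
    using la by (simp add: field_simps power2_eq_square)
  have d2: "P2 > 0" unfolding P2_def using m0 a0 rl g by (simp add: add_pos_pos)
  have al: "\<alpha> = (1 - \<rho>) / P1" unfolding \<alpha>_def P1_def ..
  have be: "\<beta> = (m * \<rho> - \<alpha> * K) / P2" unfolding \<beta>_def K_def P2_def e2 ..
  have DD: "\<gamma>\<^sup>2 + \<eta>2 * \<gamma> + \<eta>1 = P1 * P2"
    unfolding \<eta>1_def \<eta>2_def P1_def P2_def A B C using l1 m0 by (simp add: field_simps power2_eq_square)
  have L1: "\<alpha> * (1 - \<rho>) * a + \<alpha> * m * \<rho> * a + \<beta> * (1 - \<rho>) * a + \<beta> * m * \<rho> * N
      = ((1 - \<rho>) * a * (1 - \<rho> + m * \<rho>) * P2 + (m * \<rho> * P1 - (1 - \<rho>) * K) * T) / (P1 * P2)"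
    unfolding al be T_def using d1 d2 by (simp add: field_simps)
  have L2: "\<alpha> * (1 - \<rho>) * b + \<alpha> * m * \<rho> * a + \<beta> * (1 - \<rho>) * a + \<beta> * m * \<rho> * N
      = ((1 - \<rho>) * ((1 - \<rho>) * b + m * \<rho> * a) * P2 + (m * \<rho> * P1 - (1 - \<rho>) * K) * T) / (P1 * P2)"
    unfolding al be T_def using d1 d2 by (simp add: field_simps)
  have N1: "(1 - \<rho>) * a * (1 - \<rho> + m * \<rho>) * P2 + (m * \<rho> * P1 - (1 - \<rho>) * K) * T = \<eta>3 * \<gamma> + \<eta>1"
    unfolding T_def mN unfolding \<eta>1_def \<eta>3_def P1_def P2_def K_def A B C by (simp add: algebra_simps power2_eq_square)
  have N2: "(1 - \<rho>) * ((1 - \<rho>) * b + m * \<rho> * a) * P2 + (m * \<rho> * P1 - (1 - \<rho>) * K) * T = \<eta>4 * \<gamma> + \<eta>1 * \<rho>"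
    unfolding T_def mN unfolding \<eta>1_def \<eta>4_def P1_def P2_def K_def A B C by (simp add: algebra_simps power2_eq_square)
  show "1 - \<alpha> * (1 - \<rho>) * a - \<alpha> * m * \<rho> * a - \<beta> * (1 - \<rho>) * a - \<beta> * m * \<rho> * N
           = 1 - (\<eta>3 * \<gamma> + \<eta>1) / (\<gamma>\<^sup>2 + \<eta>2 * \<gamma> + \<eta>1)"
    using L1 N1 DD by (simp add: algebra_simps)
  show "\<rho> - \<alpha> * (1 - \<rho>) * b - \<alpha> * m * \<rho> * a - \<beta> * (1 - \<rho>) * a - \<beta> * m * \<rho> * N
           = \<rho> - (\<eta>4 * \<gamma> + \<eta>1 * \<rho>) / (\<gamma>\<^sup>2 + \<eta>2 * \<gamma> + \<eta>1)"
    using L2 N2 DD by (simp add: algebra_simps)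
qed

definition Sset :: "nat \<Rightarrow> nat \<Rightarrow> nat set set" where
  "Sset l m = {S. S \<subseteq> {1..l} \<and> card S = m}"

lemma finite_Sset: "finite (Sset l m)"
  unfolding Sset_def by (rule finite_subset[of _ "Pow {1..l}"]) auto

lemma rv_sets_pow: "rv_sets M I f \<subseteq> Pow (space M)"
  by (auto simp: rv_sets_def)

lemma meas_rv_sigma:
  assumes "i \<in> I"
  shows "f i \<in> borel_measurable (sigma (space M) (rv_sets M I f))"
proof (rule measurableI)
  fix A :: "real set" assume "A \<in> sets borel"
  then have "f i -` A \<inter> space M \<in> rv_sets M I f" using assms by (auto simp: rv_sets_def)
  then show "f i -` A \<inter> space (sigma (space M) (rv_sets M I f)) \<in> sets (sigma (space M) (rv_sets M I f))"
    using rv_sets_pow[of M I f] by (auto intro: sigma_sets.Basic)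
qed simp

lemma sets_rv_sigma: "sets (sigma (space M) (rv_sets M I f)) = sigma_sets (space M) (rv_sets M I f)"
  using rv_sets_pow[of M I f] by simp

lemma space_rv_sigma: "space (sigma (space M) (rv_sets M I f)) = space M"
  using rv_sets_pow[of M I f] by simp

lemma preimage_in_sigma:
  assumes "g \<in> borel_measurable (sigma (space M) G)" "G \<subseteq> Pow (space M)"
  shows "{g -` B \<inter> space M | B. B \<in> sets borel} \<subseteq> sigma_sets (space M) G"
proof
  fix x assume "x \<in> {g -` B \<inter> space M | B. B \<in> sets borel}"
  then obtain B where "B \<in> sets borel" "x = g -` B \<inter> space M" by auto
  with measurable_sets[OF assms(1) this(1)] assms(2) show "x \<in> sigma_sets (space M) G" by simp
qed

lemma (in prob_space) normal_cos_sin: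
  assumes D: "distributed M lborel Y (normal_density 0 \<sigma>)" and s: "\<sigma> > 0"
  shows "(\<integral>\<omega>. cos (Y \<omega>) \<partial>M) = exp (- \<sigma>\<^sup>2 / 2)" and "(\<integral>\<omega>. sin (Y \<omega>) \<partial>M) = 0"
proof -
  define W where "W \<omega> = (Y \<omega> - 0) / \<sigma>" for \<omega>
  have DW: "distributed M lborel W std_normal_density"
    using D normal_standard_normal_convert[OF s, of Y 0] by (simp add: W_def[abs_def])
  have Wm: "W \<in> borel_measurable M" using distributed_measurable[OF DW] by simp
  have YW: "Y \<omega> = \<sigma> * W \<omega>" for \<omega> using s by (simp add: W_def)
  have "(\<integral>\<omega>. iexp (\<sigma> * W \<omega>) \<partial>M) = integral\<^sup>L (distr M lborel W) (\<lambda>x. iexp (\<sigma> * x))"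
    using Wm by (subst integral_distr) auto
  also have "distr M lborel W = std_normal_distribution"
    using distributed_distr_eq_density[OF DW] by simp
  also have "integral\<^sup>L std_normal_distribution (\<lambda>x. iexp (\<sigma> * x)) = char std_normal_distribution \<sigma>"
    by (simp add: char_def)
  also have "\<dots> = complex_of_real (exp (- \<sigma>\<^sup>2 / 2))"
    by (simp add: char_std_normal_distribution)
  finally have ch: "(\<integral>\<omega>. iexp (Y \<omega>) \<partial>M) = complex_of_real (exp (- \<sigma>\<^sup>2 / 2))"
    by (simp add: YW)
  have Ym: "Y \<in> borel_measurable M" using distributed_measurable[OF D] by simp
  have ie: "integrable M (\<lambda>\<omega>. iexp (Y \<omega>))"
    using integrable_iexp[of "\<lambda>\<omega>. complex_of_real (Y \<omega>)"] Ym by simp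
  have "(\<integral>\<omega>. cos (Y \<omega>) \<partial>M) = (\<integral>\<omega>. Re (iexp (Y \<omega>)) \<partial>M)"
    by (simp add: Re_exp)
  also have "\<dots> = Re (\<integral>\<omega>. iexp (Y \<omega>) \<partial>M)"
    by (rule integral_bounded_linear[OF bounded_linear_Re ie])
  finally show "(\<integral>\<omega>. cos (Y \<omega>) \<partial>M) = exp (- \<sigma>\<^sup>2 / 2)" using ch by simp
  have "(\<integral>\<omega>. sin (Y \<omega>) \<partial>M) = (\<integral>\<omega>. Im (iexp (Y \<omega>)) \<partial>M)"
    by (simp add: Im_exp)
  also have "\<dots> = Im (\<integral>\<omega>. iexp (Y \<omega>) \<partial>M)"
    by (rule integral_bounded_linear[OF bounded_linear_Im ie])
  finally show "(\<integral>\<omega>. sin (Y \<omega>) \<partial>M) = 0" using ch by simp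
qed

lemma (in prob_space) normal_sq:
  assumes D: "distributed M lborel Y (normal_density 0 \<sigma>)" and s: "\<sigma> > 0"
  shows "integrable M (\<lambda>\<omega>. (Y \<omega>)\<^sup>2)" and "(\<integral>\<omega>. (Y \<omega>)\<^sup>2 \<partial>M) = \<sigma>\<^sup>2"
proof -
  have "integrable lborel (\<lambda>x. normal_density 0 \<sigma> x * (x - 0)^2)"
    by (rule integrable_normal_moment) (rule s)
  then show "integrable M (\<lambda>\<omega>. (Y \<omega>)\<^sup>2)"
    using distributed_integrable[OF D, of "\<lambda>x. x\<^sup>2"] by simp
  have "(\<integral>x. normal_density 0 \<sigma> x * x\<^sup>2 \<partial>lborel) = (\<integral>\<omega>. (Y \<omega>)\<^sup>2 \<partial>M)"
    by (rule distributed_integral[OF D]) auto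
  moreover have "(\<integral>x. normal_density 0 \<sigma> x * x\<^sup>2 \<partial>lborel) = \<sigma>\<^sup>2"
    using integral_normal_moment_even[where \<mu>=0 and \<sigma>=\<sigma> and k=1] s by simp
  ultimately show "(\<integral>\<omega>. (Y \<omega>)\<^sup>2 \<partial>M) = \<sigma>\<^sup>2" by simp
qed

lemma distributed_AE_cong:
  assumes "distributed M N X f" "AE x in M. X x = Y x" "Y \<in> measurable M N"
  shows "distributed M N Y f"
proof -
  have "distr M N X = distr M N Y"
    using assms distributed_measurable[OF assms(1)] by (intro distr_cong_AE) auto
  then show ?thesis using assms unfolding distributed_def by simp
qed

locale gset = prob_space M for M :: "'a measure" +
  fixes l m :: nat and \<rho> :: real and X :: "nat \<Rightarrow> 'a \<Rightarrow> real" and N :: "nat set \<Rightarrow> 'a \<Rightarrow> real"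
  assumes l2: "l \<ge> 2" and rlo: "-1 / (real l - 1) < \<rho>" and rhi: "\<rho> < 1"
    and JG: "jointly_gaussian M {1..l} X (\<lambda>_. 0) (\<lambda>i j. if i = j then 1 else \<rho>)"
    and ND: "\<forall>S\<in>{S. S \<subseteq> {1..l} \<and> card S = m}. distributed M lborel (N S) (normal_density 0 1)"
    and IND: "indep_sets
           (\<lambda>k. sigma_sets (space M)
                  (case k of None \<Rightarrow> rv_sets M {1..l} X | Some S \<Rightarrow> rv_sets M {S} N))
           (insert None (Some ` {S. S \<subseteq> {1..l} \<and> card S = m}))"
begin

definition C :: "nat \<Rightarrow> nat \<Rightarrow> real" where "C i j = (if i = j then 1 else \<rho>)"
definition qf :: "(nat \<Rightarrow> real) \<Rightarrow> (nat \<Rightarrow> real) \<Rightarrow> real" where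
  "qf c c' = (\<Sum>i\<in>{1..l}. \<Sum>j\<in>{1..l}. c i * c' j * C i j)"
definition L :: "(nat \<Rightarrow> real) \<Rightarrow> (nat set \<Rightarrow> real) \<Rightarrow> 'a \<Rightarrow> real" where
  "L c d \<omega> = (\<Sum>i\<in>{1..l}. c i * X i \<omega>) + (\<Sum>S\<in>Sset l m. d S * N S \<omega>)"
definition Q :: "(nat \<Rightarrow> real) \<Rightarrow> (nat set \<Rightarrow> real) \<Rightarrow> real" where
  "Q c d = qf c c + (\<Sum>S\<in>Sset l m. (d S)\<^sup>2)"

lemma rl: "1 + (real l - 1) * \<rho> > 0"
proof -
  have "real l - 1 > 0" using l2 by simp
  then show ?thesis using rlo by (simp add: field_simps)
qed

lemma Xm: "i \<in> {1..l} \<Longrightarrow> X i \<in> borel_measurable M"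
  using JG by (simp add: jointly_gaussian_def)

lemma Nd: "S \<in> Sset l m \<Longrightarrow> distributed M lborel (N S) (normal_density 0 1)"
  using ND by (simp add: Sset_def)

lemma Nm: "S \<in> Sset l m \<Longrightarrow> N S \<in> borel_measurable M"
  using distributed_measurable[OF Nd] by simp

lemma Lm: "L c d \<in> borel_measurable M"
  unfolding L_def[abs_def] using Xm Nm
  by (intro borel_measurable_add borel_measurable_sum borel_measurable_times borel_measurable_const) auto

lemma qf_expand: "qf c c = (1 - \<rho>) * (\<Sum>i\<in>{1..l}. (c i)\<^sup>2) + \<rho> * (\<Sum>i\<in>{1..l}. c i)\<^sup>2"
proof -
  have "qf c c = (\<Sum>i\<in>{1..l}. \<Sum>j\<in>{1..l}. \<rho> * (c i * c j) + (if i = j then (1 - \<rho>) * (c i)\<^sup>2 else 0))"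
    unfolding qf_def C_def by (intro sum.cong) (auto simp: algebra_simps power2_eq_square)
  also have "\<dots> = \<rho> * (\<Sum>i\<in>{1..l}. \<Sum>j\<in>{1..l}. c i * c j) + (1 - \<rho>) * (\<Sum>i\<in>{1..l}. (c i)\<^sup>2)"
    by (simp add: sum.distrib sum_distrib_left)
  also have "(\<Sum>i\<in>{1..l}. \<Sum>j\<in>{1..l}. c i * c j) = (\<Sum>i\<in>{1..l}. c i)\<^sup>2"
    by (simp add: power2_eq_square sum_product)
  finally show ?thesis by simp
qed

lemma qf_nonneg: "qf c c \<ge> 0"
proof (cases "\<rho> \<ge> 0")
  case True
  then show ?thesis unfolding qf_expand using rhi by (intro add_nonneg_nonneg mult_nonneg_nonneg sum_nonneg) auto
next
  case False
  have cs: "(\<Sum>i\<in>{1..l}. c i)\<^sup>2 \<le> (\<Sum>i\<in>{1..l}. (c i)\<^sup>2) * real l"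
    using sum_squared_le_sum_of_squares[of c "{1..l}"] by simp
  have "\<rho> * (\<Sum>i\<in>{1..l}. c i)\<^sup>2 \<ge> \<rho> * ((\<Sum>i\<in>{1..l}. (c i)\<^sup>2) * real l)"
    using False cs by (intro mult_left_mono_neg) auto
  moreover have "(1 - \<rho>) * (\<Sum>i\<in>{1..l}. (c i)\<^sup>2) + \<rho> * ((\<Sum>i\<in>{1..l}. (c i)\<^sup>2) * real l)
      = (1 + (real l - 1) * \<rho>) * (\<Sum>i\<in>{1..l}. (c i)\<^sup>2)" by (simp add: algebra_simps)
  moreover have "(1 + (real l - 1) * \<rho>) * (\<Sum>i\<in>{1..l}. (c i)\<^sup>2) \<ge> 0"
    using rl by (intro mult_nonneg_nonneg sum_nonneg) auto
  ultimately show ?thesis unfolding qf_expand by linarith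
qed

lemma Q_nonneg: "Q c d \<ge> 0"
  unfolding Q_def using qf_nonneg by (intro add_nonneg_nonneg sum_nonneg) auto

lemma L_gauss:
  shows "Q c d > 0 \<Longrightarrow> distributed M lborel (L c d) (normal_density 0 (sqrt (Q c d)))"
    and "Q c d = 0 \<Longrightarrow> AE \<omega> in M. L c d \<omega> = 0"
proof -
  define A where "A \<omega> = (\<Sum>i\<in>{1..l}. c i * X i \<omega>)" for \<omega>
  define v where "v = qf c c"
  have v0: "v \<ge> 0" unfolding v_def by (rule qf_nonneg)
  have JGc: "(v > 0 \<longrightarrow> distributed M lborel A (normal_density 0 (sqrt v))) \<and> (v = 0 \<longrightarrow> (AE \<omega> in M. A \<omega> = 0))"
    using JG unfolding jointly_gaussian_def Let_def A_def[abs_def] v_def qf_def C_def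
    by (auto simp: mult.assoc)
  define J where "J = {S \<in> Sset l m. d S \<noteq> 0}"
  define K where "K = (if v > 0 then {None} else {}) \<union> Some ` J"
  define Yf where "Yf k = (case k of None \<Rightarrow> A | Some S \<Rightarrow> (\<lambda>\<omega>. d S * N S \<omega>))" for k
  define sf where "sf k = (case k of None \<Rightarrow> sqrt v | Some S \<Rightarrow> \<bar>d S\<bar>)" for k
  have finJ: "finite J" unfolding J_def using finite_Sset by simp
  have finK: "finite K" unfolding K_def using finJ by simp
  have Jsub: "J \<subseteq> Sset l m" unfolding J_def by auto
  have Ksub: "K \<subseteq> insert None (Some ` {S. S \<subseteq> {1..l} \<and> card S = m})"
    using Jsub unfolding K_def Sset_def by auto
  have Am: "A \<in> borel_measurable (sigma (space M) (rv_sets M {1..l} X))"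
    unfolding A_def[abs_def]
    by (intro borel_measurable_sum borel_measurable_times borel_measurable_const meas_rv_sigma) auto
  have Am': "A \<in> borel_measurable M"
    unfolding A_def[abs_def] using Xm by (intro borel_measurable_sum borel_measurable_times borel_measurable_const) auto
  have indep: "indep_vars (\<lambda>_. borel) Yf K"
    unfolding indep_vars_def2
  proof
    show "\<forall>k\<in>K. random_variable borel (Yf k)"
      using Am' Nm Jsub by (auto simp: K_def Yf_def split: if_splits)
    show "indep_sets (\<lambda>k. {Yf k -` B \<inter> space M |B. B \<in> sets borel}) K"
    proof (rule indep_sets_mono_sets[OF indep_sets_mono_index[OF Ksub IND]])
      fix k assume "k \<in> K"
      show "{Yf k -` B \<inter> space M |B. B \<in> sets borel} \<subseteq> sigma_sets (space M)
              (case k of None \<Rightarrow> rv_sets M {1..l} X | Some S \<Rightarrow> rv_sets M {S} N)"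
      proof (cases k)
        case None
        then show ?thesis unfolding Yf_def using preimage_in_sigma[OF Am rv_sets_pow] by simp
      next
        case (Some S)
        have "(\<lambda>\<omega>. d S * N S \<omega>) \<in> borel_measurable (sigma (space M) (rv_sets M {S} N))"
          by (intro borel_measurable_times borel_measurable_const meas_rv_sigma) auto
        then show ?thesis unfolding Yf_def using Some preimage_in_sigma[OF _ rv_sets_pow] by simp
      qed
    qed
  qed
  have sf_pos: "k \<in> K \<Longrightarrow> sf k > 0" for k
    by (auto simp: K_def sf_def J_def split: if_splits)
  have Yd: "k \<in> K \<Longrightarrow> distributed M lborel (Yf k) (normal_density 0 (sf k))" for k
  proof -
    assume k: "k \<in> K"
    show ?thesis
    proof (cases k)
      case None
      then have "v > 0" using k by (auto simp: K_def split: if_splits)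
      then show ?thesis using JGc None by (simp add: Yf_def sf_def)
    next
      case (Some S)
      then have S: "S \<in> J" using k by (auto simp: K_def split: if_splits)
      then have "d S \<noteq> 0" "S \<in> Sset l m" by (auto simp: J_def)
      from normal_density_affine[OF Nd[OF this(2)] _ this(1), of 0]
      show ?thesis using Some by (simp add: Yf_def sf_def)
    qed
  qed
  have sumN: "(\<Sum>S\<in>Sset l m. d S * N S \<omega>) = (\<Sum>S\<in>J. d S * N S \<omega>)" for \<omega>
    unfolding J_def by (rule sum.mono_neutral_right[OF finite_Sset]) auto
  have sumD: "(\<Sum>S\<in>Sset l m. (d S)\<^sup>2) = (\<Sum>S\<in>J. (d S)\<^sup>2)"
    unfolding J_def by (rule sum.mono_neutral_right[OF finite_Sset]) auto
  have sumK: "(\<Sum>k\<in>K. g k) = (if v > 0 then g None else 0) + (\<Sum>S\<in>J. g (Some S))" for g :: "nat set option \<Rightarrow> real"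
  proof -
    have "(\<Sum>k\<in>K. g k) = (\<Sum>k\<in>(if v > 0 then {None} else {}). g k) + (\<Sum>k\<in>Some ` J. g k)"
      unfolding K_def using finJ by (intro sum.union_disjoint) auto
    also have "(\<Sum>k\<in>Some ` J. g k) = (\<Sum>S\<in>J. g (Some S))"
      by (subst sum.reindex) auto
    finally show ?thesis by simp
  qed
  have Qeq: "(\<Sum>k\<in>K. (sf k)\<^sup>2) = Q c d"
    unfolding sumK Q_def sumD using v0 by (simp add: sf_def v_def)
  have AEeq: "AE \<omega> in M. L c d \<omega> = (\<Sum>k\<in>K. Yf k \<omega>)"
  proof (cases "v > 0")
    case True
    then show ?thesis by (intro AE_I2) (simp add: sumK L_def sumN Yf_def A_def)
  next
    case False
    then have "AE \<omega> in M. A \<omega> = 0" using JGc v0 by simp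
    then show ?thesis by eventually_elim (use False in \<open>simp add: sumK L_def sumN Yf_def A_def\<close>)
  qed
  show "Q c d > 0 \<Longrightarrow> distributed M lborel (L c d) (normal_density 0 (sqrt (Q c d)))"
  proof -
    assume Qp: "Q c d > 0"
    have "K \<noteq> {}"
    proof
      assume "K = {}"
      then have "(\<Sum>k\<in>K. (sf k)\<^sup>2) = 0" by simp
      then show False using Qeq Qp by simp
    qed
    from sum_indep_normal[OF finK this indep sf_pos Yd]
    have "distributed M lborel (\<lambda>\<omega>. \<Sum>k\<in>K. Yf k \<omega>) (normal_density 0 (sqrt (Q c d)))"
      using Qeq by simp
    then show ?thesis
      by (rule distributed_AE_cong) (use AEeq Lm in \<open>auto elim: AE_mp\<close>)
  qed
  show "Q c d = 0 \<Longrightarrow> AE \<omega> in M. L c d \<omega> = 0"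
  proof -
    assume Q0: "Q c d = 0"
    have "(\<Sum>k\<in>K. (sf k)\<^sup>2) = 0" using Qeq Q0 by simp
    then have "\<forall>k\<in>K. (sf k)\<^sup>2 = 0" using finK by (subst (asm) sum_nonneg_eq_0_iff) auto
    then have "K = {}" using sf_pos by fastforce
    with AEeq show ?thesis by simp
  qed
qed

end

lemma taylor_cos_sin:
  fixes a h :: real
  shows "\<bar>cos (a + h) - cos a + h * sin a\<bar> \<le> h\<^sup>2 / 2"
    and "\<bar>sin (a + h) - sin a - h * cos a\<bar> \<le> h\<^sup>2 / 2"
proof -
  have "cmod (iexp h - (\<Sum>k \<le> 1. (\<i> * h)^k / fact k)) \<le> \<bar>h\<bar>^(Suc 1) / fact (Suc 1)"
    by (rule iexp_approx1)
  then have b: "cmod (cis h - 1 - \<i> * h) \<le> h\<^sup>2 / 2"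
    by (simp add: cis_conv_exp power2_eq_square diff_diff_eq)
  define z where "z = cis a * (cis h - 1 - \<i> * h)"
  have zb: "cmod z \<le> h\<^sup>2 / 2" unfolding z_def using b by (simp add: norm_mult)
  have "Re z = cos (a + h) - cos a + h * sin a"
    unfolding z_def by (simp add: algebra_simps cos_add sin_add)
  moreover have "Im z = sin (a + h) - sin a - h * cos a"
    unfolding z_def by (simp add: algebra_simps cos_add sin_add)
  ultimately show "\<bar>cos (a + h) - cos a + h * sin a\<bar> \<le> h\<^sup>2 / 2"
    and "\<bar>sin (a + h) - sin a - h * cos a\<bar> \<le> h\<^sup>2 / 2"
    using abs_Re_le_cmod[of z] abs_Im_le_cmod[of z] zb by linarith+
qed

lemma exp_diff_bound:
  fixes a b :: real assumes "a \<ge> 0" "b \<ge> 0"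
  shows "\<bar>exp (- a) - exp (- (a + b))\<bar> \<le> b"
proof -
  have e: "exp (- (a + b)) = exp (- a) * exp (- b)" by (simp add: exp_add[symmetric])
  have "exp (- a) \<le> 1" using assms by simp
  moreover have "0 \<le> 1 - exp (- b)" using assms by simp
  moreover have "1 - exp (- b) \<le> b" using exp_ge_add_one_self[of "- b"] by simp
  moreover have "exp (- a) - exp (- (a + b)) = exp (- a) * (1 - exp (- b))" unfolding e by (simp add: algebra_simps)
  ultimately show ?thesis
    by (metis abs_of_nonneg exp_ge_zero mult_left_le_one_le mult_nonneg_nonneg order_trans)
qed

lemma small_zero:
  fixes x K :: real
  assumes "\<And>t. t > 0 \<Longrightarrow> \<bar>x\<bar> \<le> t * K"
  shows "x = 0"
proof (rule ccontr)
  assume x: "x \<noteq> 0"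
  have K0: "K > 0" using assms[of 1] x by simp
  define t where "t = \<bar>x\<bar> / (2 * K)"
  have "t > 0" using x K0 by (simp add: t_def)
  then have "\<bar>x\<bar> \<le> t * K" by (rule assms)
  also have "\<dots> = \<bar>x\<bar> / 2" using K0 by (simp add: t_def)
  finally show False using x by simp
qed

context gset begin

definition Bf :: "(nat \<Rightarrow> real) \<Rightarrow> (nat set \<Rightarrow> real) \<Rightarrow> (nat \<Rightarrow> real) \<Rightarrow> (nat set \<Rightarrow> real) \<Rightarrow> real" where
  "Bf c d c' d' = qf c c' + (\<Sum>S\<in>Sset l m. d S * d' S)"

lemma Q_Bf: "Q c d = Bf c d c d"
  unfolding Q_def Bf_def by (simp add: power2_eq_square)

lemma qf_sym: "qf c c' = qf c' c"
  unfolding qf_def by (subst sum.swap) (auto intro!: sum.cong simp: C_def)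

lemma Bf_sym: "Bf c d c' d' = Bf c' d' c d"
  unfolding Bf_def using qf_sym by (simp add: ac_simps)

lemma qf_lin: "qf (\<lambda>i. a * c1 i + b * c2 i) c' = a * qf c1 c' + b * qf c2 c'"
  unfolding qf_def by (simp add: sum_distrib_left sum.distrib algebra_simps)

lemma Bf_lin: "Bf (\<lambda>i. a * c1 i + b * c2 i) (\<lambda>S. a * d1 S + b * d2 S) c' d' = a * Bf c1 d1 c' d' + b * Bf c2 d2 c' d'"
  unfolding Bf_def qf_lin by (simp add: sum_distrib_left sum.distrib algebra_simps)

lemma L_lin: "L (\<lambda>i. a * c1 i + b * c2 i) (\<lambda>S. a * d1 S + b * d2 S) \<omega> = a * L c1 d1 \<omega> + b * L c2 d2 \<omega>"
  unfolding L_def by (simp add: sum_distrib_left sum.distrib algebra_simps)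

lemma Q_lin: "Q (\<lambda>i. a * c1 i + b * c2 i) (\<lambda>S. a * d1 S + b * d2 S)
   = a\<^sup>2 * Q c1 d1 + 2 * a * b * Bf c1 d1 c2 d2 + b\<^sup>2 * Q c2 d2"
proof -
  let ?c = "\<lambda>i. a * c1 i + b * c2 i" and ?d = "\<lambda>S. a * d1 S + b * d2 S"
  have "Q ?c ?d = a * Bf c1 d1 ?c ?d + b * Bf c2 d2 ?c ?d" unfolding Q_Bf Bf_lin ..
  also have "Bf c1 d1 ?c ?d = a * Bf c1 d1 c1 d1 + b * Bf c2 d2 c1 d1"
    by (subst Bf_sym) (rule Bf_lin)
  also have "Bf c2 d2 ?c ?d = a * Bf c1 d1 c2 d2 + b * Bf c2 d2 c2 d2"
    by (subst Bf_sym) (rule Bf_lin)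
  also have "Bf c2 d2 c1 d1 = Bf c1 d1 c2 d2" by (rule Bf_sym)
  finally show ?thesis unfolding Q_Bf by (simp add: power2_eq_square algebra_simps)
qed

lemma L_cos_sin: "(\<integral>\<omega>. cos (L c d \<omega>) \<partial>M) = exp (- Q c d / 2)" "(\<integral>\<omega>. sin (L c d \<omega>) \<partial>M) = 0"
proof -
  have "(\<integral>\<omega>. cos (L c d \<omega>) \<partial>M) = exp (- Q c d / 2) \<and> (\<integral>\<omega>. sin (L c d \<omega>) \<partial>M) = 0"
  proof (cases "Q c d > 0")
    case True
    from normal_cos_sin[OF L_gauss(1)[OF True]] True show ?thesis by simp
  next
    case False
    then have Q0: "Q c d = 0" using Q_nonneg[of c d] by simp
    have AE: "AE \<omega> in M. L c d \<omega> = 0" by (rule L_gauss(2)[OF Q0])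
    have m1: "(\<lambda>\<omega>. cos (L c d \<omega>)) \<in> borel_measurable M" "(\<lambda>\<omega>. sin (L c d \<omega>)) \<in> borel_measurable M"
      using Lm[of c d] by measurable
    have "AE \<omega> in M. cos (L c d \<omega>) = 1" using AE by eventually_elim simp
    then have "(\<integral>\<omega>. cos (L c d \<omega>) \<partial>M) = (\<integral>\<omega>. 1 \<partial>M)"
      by (intro integral_cong_AE m1) auto
    moreover have "AE \<omega> in M. sin (L c d \<omega>) = 0" using AE by eventually_elim simp
    then have "(\<integral>\<omega>. sin (L c d \<omega>) \<partial>M) = (\<integral>\<omega>. 0 \<partial>M)"
      by (intro integral_cong_AE m1) auto
    ultimately show ?thesis using Q0 by (simp add: prob_space)
  qed
  then show "(\<integral>\<omega>. cos (L c d \<omega>) \<partial>M) = exp (- Q c d / 2)" "(\<integral>\<omega>. sin (L c d \<omega>) \<partial>M) = 0" by auto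
qed

lemma L_sq: "integrable M (\<lambda>\<omega>. (L c d \<omega>)\<^sup>2) \<and> (\<integral>\<omega>. (L c d \<omega>)\<^sup>2 \<partial>M) = Q c d"
proof (cases "Q c d > 0")
  case True
  from normal_sq[OF L_gauss(1)[OF True]] True show ?thesis by simp
next
  case False
  then have Q0: "Q c d = 0" using Q_nonneg[of c d] by simp
  have AE: "AE \<omega> in M. L c d \<omega> = 0" by (rule L_gauss(2)[OF Q0])
  have m1: "(\<lambda>\<omega>. (L c d \<omega>)\<^sup>2) \<in> borel_measurable M" using Lm[of c d] by measurable
  have AE2: "AE \<omega> in M. (L c d \<omega>)\<^sup>2 = 0" using AE by eventually_elim simp
  have "integrable M (\<lambda>\<omega>. (L c d \<omega>)\<^sup>2) = integrable M (\<lambda>\<omega>. 0::real)"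
    by (intro integrable_cong_AE m1 AE2) auto
  moreover have "(\<integral>\<omega>. (L c d \<omega>)\<^sup>2 \<partial>M) = (\<integral>\<omega>. 0 \<partial>M)"
    by (intro integral_cong_AE m1 AE2) auto
  ultimately show ?thesis using Q0 by simp
qed

lemma L_int: "integrable M (L c d)"
  by (rule square_integrable_imp_integrable[OF Lm conjunct1[OF L_sq]])

lemma L_prod: "integrable M (\<lambda>\<omega>. L c1 d1 \<omega> * L c2 d2 \<omega>) \<and> (\<integral>\<omega>. L c1 d1 \<omega> * L c2 d2 \<omega> \<partial>M) = Bf c1 d1 c2 d2"
proof -
  let ?P = "\<lambda>\<omega>. L (\<lambda>i. 1 * c1 i + 1 * c2 i) (\<lambda>S. 1 * d1 S + 1 * d2 S) \<omega>"
  let ?M = "\<lambda>\<omega>. L (\<lambda>i. 1 * c1 i + (-1) * c2 i) (\<lambda>S. 1 * d1 S + (-1) * d2 S) \<omega>"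
  have eq: "L c1 d1 \<omega> * L c2 d2 \<omega> = ((?P \<omega>)\<^sup>2 - (?M \<omega>)\<^sup>2) / 4" for \<omega>
    unfolding L_lin by (simp add: power2_eq_square algebra_simps)
  have iP: "integrable M (\<lambda>\<omega>. (?P \<omega>)\<^sup>2)" and iM: "integrable M (\<lambda>\<omega>. (?M \<omega>)\<^sup>2)"
    by (rule conjunct1[OF L_sq])+
  have "integrable M (\<lambda>\<omega>. ((?P \<omega>)\<^sup>2 - (?M \<omega>)\<^sup>2) / 4)" using iP iM by auto
  moreover have "(\<integral>\<omega>. ((?P \<omega>)\<^sup>2 - (?M \<omega>)\<^sup>2) / 4 \<partial>M) = Bf c1 d1 c2 d2"
  proof -
    have "(\<integral>\<omega>. ((?P \<omega>)\<^sup>2 - (?M \<omega>)\<^sup>2) / 4 \<partial>M) = ((\<integral>\<omega>. (?P \<omega>)\<^sup>2 \<partial>M) - (\<integral>\<omega>. (?M \<omega>)\<^sup>2 \<partial>M)) / 4"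
      using iP iM by simp
    also have "\<dots> = (Q (\<lambda>i. 1 * c1 i + 1 * c2 i) (\<lambda>S. 1 * d1 S + 1 * d2 S)
        - Q (\<lambda>i. 1 * c1 i + (-1) * c2 i) (\<lambda>S. 1 * d1 S + (-1) * d2 S)) / 4"
      by (simp only: conjunct2[OF L_sq])
    also have "\<dots> = Bf c1 d1 c2 d2" unfolding Q_lin by simp
    finally show ?thesis .
  qed
  ultimately show ?thesis by (simp only: eq)
qed

lemma trig_orth:
  assumes orth: "Bf cW dW cR dR = 0"
  shows "(\<integral>\<omega>. L cR dR \<omega> * cos (L cW dW \<omega>) \<partial>M) = 0"
    and "(\<integral>\<omega>. L cR dR \<omega> * sin (L cW dW \<omega>) \<partial>M) = 0"
proof -
  define R where "R = L cR dR"
  define W where "W = L cW dW"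
  define qR where "qR = Q cR dR"
  define qW where "qW = Q cW dW"
  have qR0: "qR \<ge> 0" and qW0: "qW \<ge> 0" unfolding qR_def qW_def by (rule Q_nonneg)+
  have Rm: "R \<in> borel_measurable M" and Wm: "W \<in> borel_measurable M" unfolding R_def W_def by (rule Lm)+
  have Ri: "integrable M R" unfolding R_def by (rule L_int)
  have R2: "integrable M (\<lambda>\<omega>. (R \<omega>)\<^sup>2)" "(\<integral>\<omega>. (R \<omega>)\<^sup>2 \<partial>M) = qR"
    unfolding R_def qR_def by (rule conjunct1[OF L_sq], rule conjunct2[OF L_sq])
  have WtR: "W \<omega> + t * R \<omega> = L (\<lambda>i. 1 * cW i + t * cR i) (\<lambda>S. 1 * dW S + t * dR S) \<omega>" for t \<omega>
    unfolding L_lin R_def W_def by simp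
  have QWtR: "Q (\<lambda>i. 1 * cW i + t * cR i) (\<lambda>S. 1 * dW S + t * dR S) = qW + t\<^sup>2 * qR" for t
    unfolding Q_lin orth qR_def qW_def by simp
  have cosWt: "(\<integral>\<omega>. cos (W \<omega> + t * R \<omega>) \<partial>M) = exp (- (qW + t\<^sup>2 * qR) / 2)" for t
    unfolding WtR L_cos_sin QWtR ..
  have sinWt: "(\<integral>\<omega>. sin (W \<omega> + t * R \<omega>) \<partial>M) = 0" for t
    unfolding WtR L_cos_sin ..
  have cosW: "(\<integral>\<omega>. cos (W \<omega>) \<partial>M) = exp (- qW / 2)" using cosWt[of 0] by simp
  have sinW: "(\<integral>\<omega>. sin (W \<omega>) \<partial>M) = 0" using sinWt[of 0] by simp
  have bi: "integrable M (\<lambda>\<omega>. f (W \<omega> + t * R \<omega>))" if "f = cos \<or> f = sin" for f t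
  proof (rule integrable_const_bound[where B=1])
    show "AE \<omega> in M. norm (f (W \<omega> + t * R \<omega>)) \<le> 1" using that by auto
    show "(\<lambda>\<omega>. f (W \<omega> + t * R \<omega>)) \<in> borel_measurable M" using that Rm Wm by auto
  qed
  have RsinW: "integrable M (\<lambda>\<omega>. R \<omega> * sin (W \<omega>))"
    by (rule integrable_mult_bdd[OF Ri, where B=1]) (use Wm in auto)
  have RcosW: "integrable M (\<lambda>\<omega>. R \<omega> * cos (W \<omega>))"
    by (rule integrable_mult_bdd[OF Ri, where B=1]) (use Wm in auto)
  have R2t: "integrable M (\<lambda>\<omega>. t\<^sup>2 * (R \<omega>)\<^sup>2 / 2)" for t using R2 by auto
  show "(\<integral>\<omega>. L cR dR \<omega> * sin (L cW dW \<omega>) \<partial>M) = 0"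
    unfolding R_def[symmetric] W_def[symmetric]
  proof (rule small_zero[where K=qR])
    fix t :: real assume t: "t > 0"
    define e where "e \<omega> = cos (W \<omega> + t * R \<omega>) - cos (W \<omega>) + t * R \<omega> * sin (W \<omega>)" for \<omega>
    have ei: "integrable M e" unfolding e_def using bi[of cos t] bi[of cos 0] integrable_mult_right[OF RsinW, of t]
      by (intro Bochner_Integration.integrable_add Bochner_Integration.integrable_diff) (auto simp: mult.assoc)
    have eb: "\<bar>\<integral>\<omega>. e \<omega> \<partial>M\<bar> \<le> t\<^sup>2 * qR / 2"
    proof -
      have "\<bar>\<integral>\<omega>. e \<omega> \<partial>M\<bar> \<le> (\<integral>\<omega>. \<bar>e \<omega>\<bar> \<partial>M)" by (rule integral_abs_bound)
      also have "\<dots> \<le> (\<integral>\<omega>. t\<^sup>2 * (R \<omega>)\<^sup>2 / 2 \<partial>M)"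
      proof (rule integral_mono[OF integrable_abs[OF ei] R2t])
        fix \<omega>
        show "\<bar>e \<omega>\<bar> \<le> t\<^sup>2 * (R \<omega>)\<^sup>2 / 2"
          using taylor_cos_sin(1)[of "W \<omega>" "t * R \<omega>"] by (simp add: e_def power_mult_distrib mult.assoc)
      qed
      also have "\<dots> = t\<^sup>2 * qR / 2" using R2 by simp
      finally show ?thesis .
    qed
    have "(\<integral>\<omega>. e \<omega> \<partial>M) = (\<integral>\<omega>. cos (W \<omega> + t * R \<omega>) \<partial>M) - (\<integral>\<omega>. cos (W \<omega>) \<partial>M) + t * (\<integral>\<omega>. R \<omega> * sin (W \<omega>) \<partial>M)"
      unfolding e_def using bi[of cos t] bi[of cos 0] RsinW by (simp add: mult.assoc)
    then have "t * (\<integral>\<omega>. R \<omega> * sin (W \<omega>) \<partial>M) = (\<integral>\<omega>. e \<omega> \<partial>M) + (exp (- qW / 2) - exp (- (qW + t\<^sup>2 * qR) / 2))"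
      using cosWt[of t] cosW by simp
    moreover have "\<bar>exp (- qW / 2) - exp (- (qW + t\<^sup>2 * qR) / 2)\<bar> \<le> t\<^sup>2 * qR / 2"
    proof -
      have a: "exp (- qW / 2) = exp (- (qW / 2))" by simp
      have b: "exp (- (qW + t\<^sup>2 * qR) / 2) = exp (- (qW / 2 + t\<^sup>2 * qR / 2))"
        by (intro arg_cong[where f=exp]) (simp add: field_simps)
      have "\<bar>exp (- (qW / 2)) - exp (- (qW / 2 + t\<^sup>2 * qR / 2))\<bar> \<le> t\<^sup>2 * qR / 2"
        using qW0 qR0 by (intro exp_diff_bound) auto
      then show ?thesis unfolding a b .
    qed
    ultimately have "\<bar>t * (\<integral>\<omega>. R \<omega> * sin (W \<omega>) \<partial>M)\<bar> \<le> t\<^sup>2 * qR" using eb by linarith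
    then have "t * \<bar>\<integral>\<omega>. R \<omega> * sin (W \<omega>) \<partial>M\<bar> \<le> t * (t * qR)" using t by (simp add: abs_mult power2_eq_square)
    then show "\<bar>\<integral>\<omega>. R \<omega> * sin (W \<omega>) \<partial>M\<bar> \<le> t * qR" using t by simp
  qed
  show "(\<integral>\<omega>. L cR dR \<omega> * cos (L cW dW \<omega>) \<partial>M) = 0"
    unfolding R_def[symmetric] W_def[symmetric]
  proof (rule small_zero[where K=qR])
    fix t :: real assume t: "t > 0"
    define e where "e \<omega> = sin (W \<omega> + t * R \<omega>) - sin (W \<omega>) - t * R \<omega> * cos (W \<omega>)" for \<omega>
    have ei: "integrable M e" unfolding e_def using bi[of sin t] bi[of sin 0] integrable_mult_right[OF RcosW, of t]
      by (intro Bochner_Integration.integrable_add Bochner_Integration.integrable_diff) (auto simp: mult.assoc)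
    have eb: "\<bar>\<integral>\<omega>. e \<omega> \<partial>M\<bar> \<le> t\<^sup>2 * qR / 2"
    proof -
      have "\<bar>\<integral>\<omega>. e \<omega> \<partial>M\<bar> \<le> (\<integral>\<omega>. \<bar>e \<omega>\<bar> \<partial>M)" by (rule integral_abs_bound)
      also have "\<dots> \<le> (\<integral>\<omega>. t\<^sup>2 * (R \<omega>)\<^sup>2 / 2 \<partial>M)"
      proof (rule integral_mono[OF integrable_abs[OF ei] R2t])
        fix \<omega>
        show "\<bar>e \<omega>\<bar> \<le> t\<^sup>2 * (R \<omega>)\<^sup>2 / 2"
          using taylor_cos_sin(2)[of "W \<omega>" "t * R \<omega>"] by (simp add: e_def power_mult_distrib mult.assoc)
      qed
      also have "\<dots> = t\<^sup>2 * qR / 2" using R2 by simp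
      finally show ?thesis .
    qed
    have "(\<integral>\<omega>. e \<omega> \<partial>M) = (\<integral>\<omega>. sin (W \<omega> + t * R \<omega>) \<partial>M) - (\<integral>\<omega>. sin (W \<omega>) \<partial>M) - t * (\<integral>\<omega>. R \<omega> * cos (W \<omega>) \<partial>M)"
      unfolding e_def using bi[of sin t] bi[of sin 0] RcosW by (simp add: mult.assoc)
    then have "t * (\<integral>\<omega>. R \<omega> * cos (W \<omega>) \<partial>M) = - (\<integral>\<omega>. e \<omega> \<partial>M)"
      using sinWt[of t] sinW by simp
    then have "\<bar>t * (\<integral>\<omega>. R \<omega> * cos (W \<omega>) \<partial>M)\<bar> \<le> t\<^sup>2 * qR" using eb qR0 by simp
    then have "t * \<bar>\<integral>\<omega>. R \<omega> * cos (W \<omega>) \<partial>M\<bar> \<le> t * (t * qR)" using t by (simp add: abs_mult power2_eq_square)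
    then show "\<bar>\<integral>\<omega>. R \<omega> * cos (W \<omega>) \<partial>M\<bar> \<le> t * qR" using t by simp
  qed
qed

end

lemma card_sub_containing:
  assumes A: "finite A" and BA: "B \<subseteq> A" and kB: "card B \<le> k"
  shows "card {S. S \<subseteq> A \<and> card S = k \<and> B \<subseteq> S} = card (A - B) choose (k - card B)"
proof -
  have fB: "finite B" using A BA finite_subset by blast
  have eq: "{S. S \<subseteq> A \<and> card S = k \<and> B \<subseteq> S} = (\<lambda>S'. S' \<union> B) ` {S'. S' \<subseteq> A - B \<and> card S' = k - card B}"
  proof safe
    fix S assume S: "S \<subseteq> A" "B \<subseteq> S" "k = card S"
    have fS: "finite S" using S A finite_subset by blast
    have "card (S - B) = card S - card B" using S fB by (simp add: card_Diff_subset)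
    moreover have "S = (S - B) \<union> B" using S by auto
    ultimately show "S \<in> (\<lambda>S'. S' \<union> B) ` {S'. S' \<subseteq> A - B \<and> card S' = card S - card B}"
      using S by (intro image_eqI[of _ _ "S - B"]) auto
  next
    fix S' assume S': "S' \<subseteq> A - B" "card S' = k - card B"
    have fS': "finite S'" using S' A finite_subset by blast
    have "card (S' \<union> B) = card S' + card B" using S' fS' fB by (intro card_Un_disjoint) auto
    then show "card (S' \<union> B) = k" using S' kB by simp
  qed (use BA in auto)
  have inj: "inj_on (\<lambda>S'. S' \<union> B) {S'. S' \<subseteq> A - B \<and> card S' = k - card B}"
  proof (rule inj_onI)
    fix X Y assume "X \<in> {S'. S' \<subseteq> A - B \<and> card S' = k - card B}" "Y \<in> {S'. S' \<subseteq> A - B \<and> card S' = k - card B}"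
      "X \<union> B = Y \<union> B"
    then show "X = Y" by blast
  qed
  show ?thesis unfolding eq card_image[OF inj] using A by (intro n_subsets) auto
qed

lemma card_Sset: "card (Sset l m) = l choose m"
  unfolding Sset_def using n_subsets[of "{1..l}" m] by simp

lemma card_Sset1:
  assumes "i \<in> {1..l}" "m \<ge> 1"
  shows "card {S \<in> Sset l m. i \<in> S} = (l - 1) choose (m - 1)"
proof -
  have "{S \<in> Sset l m. i \<in> S} = {S. S \<subseteq> {1..l} \<and> card S = m \<and> {i} \<subseteq> S}" by (auto simp: Sset_def)
  also have "card \<dots> = card ({1..l} - {i}) choose (m - card {i})"
    using assms by (intro card_sub_containing) auto
  finally show ?thesis using assms by simp
qed

lemma card_Sset2:
  assumes "i \<in> {1..l}" "j \<in> {1..l}" "i \<noteq> j" "m \<ge> 2"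
  shows "card {S \<in> Sset l m. i \<in> S \<and> j \<in> S} = (l - 2) choose (m - 2)"
proof -
  have "{S \<in> Sset l m. i \<in> S \<and> j \<in> S} = {S. S \<subseteq> {1..l} \<and> card S = m \<and> {i, j} \<subseteq> S}" by (auto simp: Sset_def)
  also have "card \<dots> = card ({1..l} - {i, j}) choose (m - card {i, j})"
    using assms by (intro card_sub_containing) auto
  also have "card ({1..l} - {i, j}) = l - 2" using assms by (subst card_Diff_subset) auto
  also have "card {i, j} = 2" using assms by simp
  finally show ?thesis .
qed

lemma card_Sset2':
  assumes "i \<noteq> j" "m < 2"
  shows "card {S \<in> Sset l m. i \<in> S \<and> j \<in> S} = 0"
proof -
  have "{S \<in> Sset l m. i \<in> S \<and> j \<in> S} = {}"
  proof safe
    fix S assume S: "S \<in> Sset l m" "i \<in> S" "j \<in> S"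
    then have "finite S" "card S = m" by (auto simp: Sset_def intro: finite_subset)
    moreover have "{i, j} \<subseteq> S" using S by auto
    ultimately have "card {i, j} \<le> m" by (metis card_mono)
    then show "S \<in> {}" using assms by simp
  qed
  then show ?thesis by (metis card.empty)
qed

lemma sum_ind_card:
  assumes "finite A"
  shows "(\<Sum>x\<in>A. if P x then (1::real) else 0) = real (card {x\<in>A. P x})"
proof -
  have "(\<Sum>x\<in>A. if P x then (1::real) else 0) = (\<Sum>x\<in>{x\<in>A. P x}. 1)"
    by (rule sum.inter_filter[symmetric, OF assms])
  then show ?thesis by simp
qed

context gset begin

lemma L_sum:
  assumes "finite I"
  shows "L (\<lambda>k. \<Sum>s\<in>I. w s * cf s k) (\<lambda>S'. \<Sum>s\<in>I. w s * df s S') \<omega> = (\<Sum>s\<in>I. w s * L (cf s) (df s) \<omega>)"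
  unfolding L_def
  by (simp add: sum_distrib_left sum_distrib_right sum.distrib mult.assoc)
     (simp add: sum.swap[of _ I] distrib_left sum.distrib sum_distrib_left mult.assoc)

lemma qf_sum:
  assumes "finite I"
  shows "qf (\<lambda>k. \<Sum>s\<in>I. w s * cf s k) c' = (\<Sum>s\<in>I. w s * qf (cf s) c')"
  unfolding qf_def
  by (simp add: sum_distrib_left sum_distrib_right mult.assoc)
     (simp add: sum.swap[of _ I])

lemma Bf_sum:
  assumes "finite I"
  shows "Bf (\<lambda>k. \<Sum>s\<in>I. w s * cf s k) (\<lambda>S'. \<Sum>s\<in>I. w s * df s S') c' d' = (\<Sum>s\<in>I. w s * Bf (cf s) (df s) c' d')"
  unfolding Bf_def qf_sum[OF assms]
  by (simp add: sum_distrib_left sum_distrib_right sum.distrib mult.assoc)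
     (simp add: sum.swap[of _ I] distrib_left sum.distrib sum_distrib_left mult.assoc)

end

lemma if_mult0: "(if P then a else 0) * (x::real) = (if P then a * x else 0)"
  and mult_if0: "x * (if P then a else 0) = (if P then x * a else (0::real))"
  by simp_all

lemma sum_if_out: "(\<Sum>j\<in>A. if P then f j else 0) = (if P then (\<Sum>j\<in>A. f j) else (0::real))"
  by simp

locale gset2 = gset +
  fixes \<gamma> :: real
  assumes gpos: "\<gamma> > 0" and m1: "1 \<le> m" and ml: "m \<le> l"
begin

definition cX :: "nat \<Rightarrow> nat \<Rightarrow> real" where "cX i k = (if k = i then 1 else 0)"
definition dZ :: "nat set \<Rightarrow> real" where "dZ S = 0"
definition cU :: "nat set \<Rightarrow> nat \<Rightarrow> real" where "cU T k = (if k \<in> T then 1 else 0)"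
definition dU :: "nat set \<Rightarrow> nat set \<Rightarrow> real" where "dU T S = (if S = T then sqrt \<gamma> else 0)"
definition U :: "nat set \<Rightarrow> 'a \<Rightarrow> real" where "U T \<omega> = (\<Sum>k\<in>T. X k \<omega>) + sqrt \<gamma> * N T \<omega>"

lemma Sset_sub: "T \<in> Sset l m \<Longrightarrow> T \<subseteq> {1..l}" and Sset_card: "T \<in> Sset l m \<Longrightarrow> card T = m"
  and Sset_fin: "T \<in> Sset l m \<Longrightarrow> finite T"
  by (auto simp: Sset_def intro: finite_subset)

lemma L_X: "i \<in> {1..l} \<Longrightarrow> L (cX i) dZ \<omega> = X i \<omega>"
  unfolding L_def cX_def dZ_def by (simp add: if_mult0 mult_if0 cong: if_cong)

lemma L_U: assumes "T \<in> Sset l m" shows "L (cU T) (dU T) \<omega> = U T \<omega>"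
proof -
  have "(\<Sum>k\<in>{1..l}. cU T k * X k \<omega>) = (\<Sum>k\<in>T. X k \<omega>)"
    unfolding cU_def using Sset_sub[OF assms]
    by (simp add: if_mult0 mult_if0 sum.inter_restrict[symmetric] Int_absorb1 cong: if_cong)
  moreover have "(\<Sum>S\<in>Sset l m. dU T S * N S \<omega>) = sqrt \<gamma> * N T \<omega>"
    unfolding dU_def using assms finite_Sset by (simp add: if_mult0 mult_if0 cong: if_cong)
  ultimately show ?thesis unfolding L_def U_def by simp
qed

lemma sumC: assumes "S \<in> Sset l m" shows "(\<Sum>k\<in>S. C k j) = real m * \<rho> + (if j \<in> S then 1 - \<rho> else 0)"
proof -
  have "(\<Sum>k\<in>S. C k j) = (\<Sum>k\<in>S. \<rho> + (if k = j then 1 - \<rho> else 0))"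
    unfolding C_def by (intro sum.cong) auto
  also have "\<dots> = real (card S) * \<rho> + (if j \<in> S then 1 - \<rho> else 0)"
    using Sset_fin[OF assms] by (simp add: sum.distrib)
  finally show ?thesis using Sset_card[OF assms] by simp
qed

lemma qf_cX: "i \<in> {1..l} \<Longrightarrow> qf (cX i) c' = (\<Sum>j\<in>{1..l}. c' j * C i j)"
  unfolding qf_def cX_def by (simp add: if_mult0 mult_if0 sum_if_out cong: if_cong)

lemma qf_cU: "T \<in> Sset l m \<Longrightarrow> qf (cU T) c' = (\<Sum>k\<in>T. \<Sum>j\<in>{1..l}. c' j * C k j)"
  unfolding qf_def cU_def using Sset_sub[of T]
  by (simp add: if_mult0 mult_if0 sum_if_out sum.inter_restrict[symmetric] Int_absorb1 cong: if_cong)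

lemma BXX: "i \<in> {1..l} \<Longrightarrow> j \<in> {1..l} \<Longrightarrow> Bf (cX i) dZ (cX j) dZ = C i j"
  unfolding Bf_def qf_cX by (simp add: cX_def dZ_def if_mult0 mult_if0 cong: if_cong)

lemma BUX: assumes "S \<in> Sset l m" "j \<in> {1..l}"
  shows "Bf (cU S) (dU S) (cX j) dZ = real m * \<rho> + (if j \<in> S then 1 - \<rho> else 0)"
proof -
  have "qf (cU S) (cX j) = (\<Sum>k\<in>S. C k j)"
    unfolding qf_cU[OF assms(1)] using assms(2) by (simp add: cX_def if_mult0 mult_if0 cong: if_cong)
  then show ?thesis unfolding Bf_def dZ_def using sumC[OF assms(1)] by simp
qed

lemma BUU: assumes "S \<in> Sset l m" "T \<in> Sset l m"
  shows "Bf (cU S) (dU S) (cU T) (dU T) = (1 - \<rho>) * real (card (S \<inter> T)) + real m * real m * \<rho> + (if S = T then \<gamma> else 0)"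
proof -
  have "qf (cU S) (cU T) = (\<Sum>j\<in>T. \<Sum>k\<in>S. C k j)"
    unfolding qf_cU[OF assms(1)] using Sset_sub[OF assms(2)]
    by (subst sum.swap) (simp add: cU_def if_mult0 mult_if0 sum.inter_restrict[symmetric] Int_absorb1 cong: if_cong)
  also have "\<dots> = (\<Sum>j\<in>T. real m * \<rho> + (if j \<in> S then 1 - \<rho> else 0))"
    using sumC[OF assms(1)] by simp
  also have "\<dots> = real m * real m * \<rho> + (1 - \<rho>) * real (card (S \<inter> T))"
  proof -
    have "(\<Sum>j\<in>T. (if j \<in> S then 1 - \<rho> else 0)) = (1 - \<rho>) * (\<Sum>j\<in>T. if j \<in> S then 1 else 0)"
      by (simp add: sum_distrib_left if_mult0 mult_if0 cong: if_cong)
    also have "(\<Sum>j\<in>T. if j \<in> S then 1 else (0::real)) = real (card {j\<in>T. j \<in> S})"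
      by (rule sum_ind_card[OF Sset_fin[OF assms(2)]])
    also have "{j\<in>T. j \<in> S} = S \<inter> T" by auto
    finally show ?thesis using Sset_card[OF assms(2)] by (simp add: sum.distrib)
  qed
  finally have q: "qf (cU S) (cU T) = real m * real m * \<rho> + (1 - \<rho>) * real (card (S \<inter> T))" .
  have "(\<Sum>S'\<in>Sset l m. dU S S' * dU T S') = (if S = T then \<gamma> else 0)"
    unfolding dU_def using assms finite_Sset gpos by (simp add: if_mult0 mult_if0 cong: if_cong)
  then show ?thesis unfolding Bf_def q by simp
qed

end

context gset2 begin

definition aa :: real where "aa = real ((l - 1) choose (m - 1))"
definition bb :: real where "bb = (if m \<ge> 2 then real ((l - 2) choose (m - 2)) else 0)"
definition NN :: real where "NN = real (l choose m)"
definition cc :: real where "cc = aa - bb"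

lemma l1: "l \<ge> 1" using l2 by simp

lemma cnt1: "i \<in> {1..l} \<Longrightarrow> real (card {S\<in>Sset l m. i \<in> S}) = aa"
  unfolding aa_def using card_Sset1[of i l m] m1 by simp

lemma cnt2: assumes "i \<in> {1..l}" "j \<in> {1..l}"
  shows "real (card {S\<in>Sset l m. i \<in> S \<and> j \<in> S}) = (if i = j then aa else bb)"
proof (cases "i = j")
  case True then show ?thesis using cnt1[OF assms(1)] by simp
next
  case False
  show ?thesis
  proof (cases "m \<ge> 2")
    case True then show ?thesis using card_Sset2[OF assms False True] False by (simp add: bb_def)
  next
    case F: False then show ?thesis using card_Sset2'[OF False] False by (simp add: bb_def)
  qed
qed

lemma cntN: "real (card (Sset l m)) = NN"
  unfolding NN_def card_Sset ..

lemma rel_la: "real l * aa = real m * NN"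
proof -
  have "Suc (l - 1) * ((l - 1) choose (m - 1)) = (Suc (l - 1) choose Suc (m - 1)) * Suc (m - 1)"
    by (rule Suc_times_binomial_eq)
  then have "l * ((l - 1) choose (m - 1)) = (l choose m) * m" using l1 m1 by simp
  then have "real (l * ((l - 1) choose (m - 1))) = real ((l choose m) * m)" by simp
  then show ?thesis unfolding aa_def NN_def by (simp add: ac_simps)
qed

lemma rel_bl: "(real l - 1) * bb = (real m - 1) * aa"
proof (cases "m \<ge> 2")
  case True
  have "Suc (l - 2) * ((l - 2) choose (m - 2)) = (Suc (l - 2) choose Suc (m - 2)) * Suc (m - 2)"
    by (rule Suc_times_binomial_eq)
  moreover have "Suc (l - 2) = l - 1" "Suc (m - 2) = m - 1" using l2 True by auto
  ultimately have "(l - 1) * ((l - 2) choose (m - 2)) = ((l - 1) choose (m - 1)) * (m - 1)" by simp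
  then have "real ((l - 1) * ((l - 2) choose (m - 2))) = real (((l - 1) choose (m - 1)) * (m - 1))" by simp
  then show ?thesis unfolding aa_def bb_def using True l2 by (simp add: of_nat_diff ac_simps)
next
  case False
  then have "m = 1" using m1 by simp
  moreover have "bb = 0" using False by (simp add: bb_def)
  ultimately show ?thesis by simp
qed

lemma cc_eq: "cc = real ((l - 2) choose (m - 1))"
proof (cases "m \<ge> 2")
  case True
  have "(Suc (l - 2) choose Suc (m - 2)) = ((l - 2) choose (m - 2)) + ((l - 2) choose Suc (m - 2))"
    by (rule binomial_Suc_Suc)
  moreover have "Suc (l - 2) = l - 1" "Suc (m - 2) = m - 1" using l2 True by auto
  ultimately have "((l - 1) choose (m - 1)) = ((l - 2) choose (m - 2)) + ((l - 2) choose (m - 1))" by simp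
  then show ?thesis unfolding cc_def aa_def bb_def using True by simp
next
  case False
  then have "m = 1" using m1 by simp
  have b0: "bb = 0" using False by (simp add: bb_def)
  have a1: "aa = 1" unfolding aa_def using \<open>m = 1\<close> by simp
  show ?thesis unfolding cc_def by (simp only: a1 b0) (simp add: \<open>m = 1\<close>)
qed

lemma aa_pos: "aa > 0" unfolding aa_def using ml m1 by simp
lemma cc_nonneg: "cc \<ge> 0" unfolding cc_eq by simp

lemma cb1: "cbinom (int l - 1) (int m - 1) = aa"
proof -
  have "nat (int l - 1) = l - 1" "nat (int m - 1) = m - 1" using l1 m1 by auto
  then show ?thesis unfolding cbinom_def aa_def using l1 m1 by simp
qed

lemma cb2: "cbinom (int l - 2) (int m - 1) = cc"
proof -
  have "nat (int l - 2) = l - 2" "nat (int m - 1) = m - 1" using l2 m1 by auto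
  then show ?thesis unfolding cbinom_def cc_eq using l2 m1 by simp
qed

lemma cb3: "cbinom (int l - 2) (int m - 2) = bb"
proof (cases "m \<ge> 2")
  case True
  have "nat (int l - 2) = l - 2" "nat (int m - 2) = m - 2" using l2 True by auto
  then show ?thesis unfolding cbinom_def bb_def using l2 True by simp
next
  case False
  then show ?thesis unfolding cbinom_def bb_def by simp
qed

end

context gset2 begin

definition al :: real where "al = (1 - \<rho>) / ((1 - \<rho>) * cc + \<gamma>)"
definition be :: real where
  "be = (real m * \<rho> - al * ((1 - \<rho>) * real m * bb + (real m)\<^sup>2 * \<rho> * aa)) / ((1 - \<rho>) * real m * aa + (real m)\<^sup>2 * \<rho> * NN + \<gamma>)"
definition w :: "nat \<Rightarrow> nat set \<Rightarrow> real" where "w i S = al * (if i \<in> S then 1 else 0) + be"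
definition cR :: "nat \<Rightarrow> nat \<Rightarrow> real" where
  "cR i = (\<lambda>k. 1 * cX i k + (-1) * (\<Sum>S\<in>Sset l m. w i S * cU S k))"
definition dR :: "nat \<Rightarrow> nat set \<Rightarrow> real" where
  "dR i = (\<lambda>S'. 1 * dZ S' + (-1) * (\<Sum>S\<in>Sset l m. w i S * dU S S'))"

lemma P1pos: "(1 - \<rho>) * cc + \<gamma> > 0"
  using rhi cc_nonneg gpos by (simp add: add_nonneg_pos)

lemma P2eq: "(1 - \<rho>) * real m * aa + (real m)\<^sup>2 * \<rho> * NN = real m * aa * (1 + (real l - 1) * \<rho>)"
proof -
  have "(real m)\<^sup>2 * \<rho> * NN = real m * \<rho> * (real m * NN)" by (simp add: power2_eq_square)
  also have "\<dots> = real m * \<rho> * (real l * aa)" using rel_la by simp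
  finally show ?thesis by (simp add: algebra_simps)
qed

lemma P2pos: "(1 - \<rho>) * real m * aa + (real m)\<^sup>2 * \<rho> * NN + \<gamma> > 0"
  unfolding P2eq using m1 aa_pos rl gpos by (simp add: add_pos_pos)

lemma eq_al: "al * ((1 - \<rho>) * cc + \<gamma>) = 1 - \<rho>"
  unfolding al_def using P1pos by simp

lemma eq_be: "al * ((1 - \<rho>) * real m * bb + (real m)\<^sup>2 * \<rho> * aa) + be * ((1 - \<rho>) * real m * aa + (real m)\<^sup>2 * \<rho> * NN + \<gamma>) = real m * \<rho>"
  unfolding be_def using P2pos by simp

lemma Bf_R: "Bf (cR i) (dR i) c' d' = Bf (cX i) dZ c' d' - (\<Sum>S\<in>Sset l m. w i S * Bf (cU S) (dU S) c' d')"
  unfolding cR_def dR_def Bf_lin Bf_sum[OF finite_Sset] by simp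

lemma L_R: assumes "i \<in> {1..l}" shows "L (cR i) (dR i) \<omega> = X i \<omega> - (\<Sum>S\<in>Sset l m. w i S * U S \<omega>)"
proof -
  have "L (cR i) (dR i) \<omega> = X i \<omega> - (\<Sum>S\<in>Sset l m. w i S * L (cU S) (dU S) \<omega>)"
    unfolding cR_def dR_def L_lin L_sum[OF finite_Sset] L_X[OF assms] by simp
  also have "(\<Sum>S\<in>Sset l m. w i S * L (cU S) (dU S) \<omega>) = (\<Sum>S\<in>Sset l m. w i S * U S \<omega>)"
    by (intro sum.cong refl) (simp add: L_U)
  finally show ?thesis .
qed

lemma card_Int_sum: assumes "S \<in> Sset l m" "T \<in> Sset l m"
  shows "real (card (S \<inter> T)) = (\<Sum>k\<in>T. if k \<in> S then 1 else 0)"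
proof -
  have "(\<Sum>k\<in>T. if k \<in> S then 1 else (0::real)) = real (card {k\<in>T. k \<in> S})"
    by (rule sum_ind_card[OF Sset_fin[OF assms(2)]])
  moreover have "{k\<in>T. k \<in> S} = S \<inter> T" by auto
  ultimately show ?thesis by simp
qed

lemma s_ind: "i \<in> {1..l} \<Longrightarrow> (\<Sum>S\<in>Sset l m. if i \<in> S then 1 else 0) = aa"
  using sum_ind_card[OF finite_Sset, of "\<lambda>S. i \<in> S" l m] cnt1 by simp

lemma s_ind2: "i \<in> {1..l} \<Longrightarrow> j \<in> {1..l} \<Longrightarrow>
    (\<Sum>S\<in>Sset l m. (if i \<in> S then 1 else 0) * (if j \<in> S then 1 else 0)) = (if i = j then aa else bb)"
proof -
  assume ij: "i \<in> {1..l}" "j \<in> {1..l}"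
  have "(\<Sum>S\<in>Sset l m. (if i \<in> S then 1 else 0) * (if j \<in> S then 1 else 0)) = (\<Sum>S\<in>Sset l m. if i \<in> S \<and> j \<in> S then 1 else (0::real))"
    by (intro sum.cong) auto
  also have "\<dots> = real (card {S\<in>Sset l m. i \<in> S \<and> j \<in> S})" by (rule sum_ind_card[OF finite_Sset])
  finally show ?thesis using cnt2[OF ij] by simp
qed

lemma s1: assumes "i \<in> {1..l}" "T \<in> Sset l m"
  shows "(\<Sum>S\<in>Sset l m. (if i \<in> S then 1 else 0) * real (card (S \<inter> T))) = real m * bb + (if i \<in> T then aa - bb else 0)"
proof -
  have "(\<Sum>S\<in>Sset l m. (if i \<in> S then 1 else 0) * real (card (S \<inter> T)))
      = (\<Sum>S\<in>Sset l m. \<Sum>k\<in>T. (if i \<in> S then 1 else 0) * (if k \<in> S then 1 else 0))"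
    by (intro sum.cong refl) (simp add: card_Int_sum assms sum_distrib_left)
  also have "\<dots> = (\<Sum>k\<in>T. \<Sum>S\<in>Sset l m. (if i \<in> S then 1 else 0) * (if k \<in> S then 1 else 0))"
    by (rule sum.swap)
  also have "\<dots> = (\<Sum>k\<in>T. bb + (if k = i then aa - bb else 0))"
    using s_ind2[OF assms(1)] Sset_sub[OF assms(2)] by (intro sum.cong refl) auto
  also have "\<dots> = real m * bb + (if i \<in> T then aa - bb else 0)"
    using Sset_fin[OF assms(2)] Sset_card[OF assms(2)] by (simp add: sum.distrib)
  finally show ?thesis .
qed

lemma s2: assumes "T \<in> Sset l m"
  shows "(\<Sum>S\<in>Sset l m. real (card (S \<inter> T))) = real m * aa"
proof -
  have "(\<Sum>S\<in>Sset l m. real (card (S \<inter> T))) = (\<Sum>S\<in>Sset l m. \<Sum>k\<in>T. if k \<in> S then 1 else 0)"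
    by (intro sum.cong refl) (simp add: card_Int_sum assms)
  also have "\<dots> = (\<Sum>k\<in>T. \<Sum>S\<in>Sset l m. if k \<in> S then 1 else 0)" by (rule sum.swap)
  also have "\<dots> = (\<Sum>k\<in>T. aa)"
    using s_ind Sset_sub[OF assms] by (intro sum.cong refl) auto
  finally show ?thesis using Sset_card[OF assms] by simp
qed

lemma orth: assumes "i \<in> {1..l}" "T \<in> Sset l m"
  shows "Bf (cR i) (dR i) (cU T) (dU T) = 0"
proof -
  let ?I = "\<lambda>S. if i \<in> S then 1 else (0::real)"
  let ?c = "\<lambda>S. real (card (S \<inter> T))"
  let ?g = "\<lambda>S. if S = T then \<gamma> else 0"
  have BXU: "Bf (cX i) dZ (cU T) (dU T) = real m * \<rho> + ?I T * (1 - \<rho>)"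
    using Bf_sym BUX[OF assms(2,1)] by simp
  have "(\<Sum>S\<in>Sset l m. w i S * Bf (cU S) (dU S) (cU T) (dU T))
      = (\<Sum>S\<in>Sset l m. al * (1 - \<rho>) * (?I S * ?c S) + al * (real m * real m * \<rho>) * ?I S + al * (?I S * ?g S)
            + be * (1 - \<rho>) * ?c S + be * (real m * real m * \<rho>) + be * ?g S)"
    by (intro sum.cong refl) (simp add: BUU assms w_def algebra_simps)
  also have "\<dots> = al * (1 - \<rho>) * (\<Sum>S\<in>Sset l m. ?I S * ?c S) + al * (real m * real m * \<rho>) * (\<Sum>S\<in>Sset l m. ?I S)
      + al * (\<Sum>S\<in>Sset l m. ?I S * ?g S) + be * (1 - \<rho>) * (\<Sum>S\<in>Sset l m. ?c S)
      + be * (real m * real m * \<rho>) * real (card (Sset l m)) + be * (\<Sum>S\<in>Sset l m. ?g S)"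
    by (simp add: sum.distrib sum_distrib_left)
  also have "(\<Sum>S\<in>Sset l m. ?I S * ?g S) = ?I T * \<gamma>"
    using assms(2) finite_Sset by (simp add: if_mult0 mult_if0 cong: if_cong)
  also have "(\<Sum>S\<in>Sset l m. ?g S) = \<gamma>"
    using assms(2) finite_Sset by simp
  finally have E: "(\<Sum>S\<in>Sset l m. w i S * Bf (cU S) (dU S) (cU T) (dU T))
     = al * (1 - \<rho>) * (real m * bb + (if i \<in> T then aa - bb else 0)) + al * (real m * real m * \<rho>) * aa
      + al * (?I T * \<gamma>) + be * (1 - \<rho>) * (real m * aa) + be * (real m * real m * \<rho>) * NN + be * \<gamma>"
    unfolding s1[OF assms] s2[OF assms(2)] s_ind[OF assms(1)] cntN .
  have ea: "al * ((1 - \<rho>) * cc + \<gamma>) = 1 - \<rho>" by (rule eq_al)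
  have eb: "al * ((1 - \<rho>) * real m * bb + (real m)\<^sup>2 * \<rho> * aa) + be * ((1 - \<rho>) * real m * aa + (real m)\<^sup>2 * \<rho> * NN + \<gamma>) = real m * \<rho>"
    by (rule eq_be)
  show ?thesis
  proof (cases "i \<in> T")
    case True
    then show ?thesis unfolding Bf_R E BXU using ea eb
      by (simp add: cc_def algebra_simps power2_eq_square)
  next
    case False
    then show ?thesis unfolding Bf_R E BXU using eb
      by (simp add: algebra_simps power2_eq_square)
  qed
qed

lemma final_val: assumes "i \<in> {1..l}" "j \<in> {1..l}"
  shows "Bf (cR i) (dR i) (cR j) (dR j) = C i j - al * (1 - \<rho>) * (if i = j then aa else bb) - al * real m * \<rho> * aa - be * (1 - \<rho>) * aa - be * real m * \<rho> * NN"
proof -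
  have "Bf (cR i) (dR i) (cR j) (dR j) = Bf (cR j) (dR j) (cR i) (dR i)" by (rule Bf_sym)
  also have "\<dots> = Bf (cX j) dZ (cR i) (dR i) - (\<Sum>T\<in>Sset l m. w j T * Bf (cU T) (dU T) (cR i) (dR i))"
    by (rule Bf_R)
  also have "(\<Sum>T\<in>Sset l m. w j T * Bf (cU T) (dU T) (cR i) (dR i)) = 0"
  proof (intro sum.neutral ballI)
    fix T assume T: "T \<in> Sset l m"
    have "Bf (cU T) (dU T) (cR i) (dR i) = Bf (cR i) (dR i) (cU T) (dU T)" by (rule Bf_sym)
    then show "w j T * Bf (cU T) (dU T) (cR i) (dR i) = 0" using orth[OF assms(1) T] by simp
  qed
  also have "Bf (cX j) dZ (cR i) (dR i) = Bf (cR i) (dR i) (cX j) dZ" by (rule Bf_sym)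
  also have "\<dots> = C i j - (\<Sum>S\<in>Sset l m. w i S * Bf (cU S) (dU S) (cX j) dZ)"
    unfolding Bf_R BXX[OF assms] ..
  also have "(\<Sum>S\<in>Sset l m. w i S * Bf (cU S) (dU S) (cX j) dZ)
      = (\<Sum>S\<in>Sset l m. al * (1 - \<rho>) * ((if i \<in> S then 1 else 0) * (if j \<in> S then 1 else 0))
           + al * real m * \<rho> * (if i \<in> S then 1 else 0) + be * (1 - \<rho>) * (if j \<in> S then 1 else 0) + be * real m * \<rho>)"
    by (intro sum.cong refl) (simp add: BUX[OF _ assms(2)] w_def algebra_simps)
  also have "\<dots> = al * (1 - \<rho>) * (if i = j then aa else bb) + al * real m * \<rho> * aa + be * (1 - \<rho>) * aa + be * real m * \<rho> * NN"
    by (simp add: sum.distrib sum_distrib_left[symmetric] s_ind2[OF assms] s_ind[OF assms(1)] s_ind[OF assms(2)] cntN)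
  finally show ?thesis by simp
qed

end

context gset2 begin

definition FF :: "'a measure" where "FF = sigma (space M) (rv_sets M (Sset l m) U)"

lemma Um': "U T \<in> borel_measurable M" if "T \<in> Sset l m"
proof -
  have "U T = L (cU T) (dU T)" using L_U[OF that] by (simp add: fun_eq_iff)
  then show ?thesis using Lm by simp
qed

lemma sub_FF: "subalgebra M FF"
  unfolding subalgebra_def FF_def space_rv_sigma sets_rv_sigma
proof (intro conjI refl sets.sigma_sets_subset subsetI)
  fix A assume "A \<in> rv_sets M (Sset l m) U"
  then obtain T B where "T \<in> Sset l m" "B \<in> sets borel" "A = U T -` B \<inter> space M"
    by (auto simp: rv_sets_def)
  then show "A \<in> sets M" using Um' by (auto intro: measurable_sets)
qed

lemma sfs: "sigma_finite_subalgebra M FF"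
  by (rule finite_measure_subalgebra_is_sigma_finite)
     (simp add: finite_measure_subalgebra_def finite_measure_subalgebra_axioms_def sub_FF finite_measure_axioms)

definition Y :: "nat \<Rightarrow> 'a \<Rightarrow> real" where "Y i \<omega> = (\<Sum>S\<in>Sset l m. w i S * U S \<omega>)"

lemma lin_U: "(\<Sum>T\<in>Sset l m. s T * U T \<omega>) = L (\<lambda>k. \<Sum>T\<in>Sset l m. s T * cU T k) (\<lambda>S'. \<Sum>T\<in>Sset l m. s T * dU T S') \<omega>"
  unfolding L_sum[OF finite_Sset] by (intro sum.cong refl) (simp add: L_U)

lemma R_set_zero:
  assumes i: "i \<in> {1..l}" and A: "A \<in> sets FF"
  shows "(\<integral>\<omega>\<in>A. L (cR i) (dR i) \<omega> \<partial>M) = 0"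
proof -
  have orthW: "Bf (\<lambda>k. \<Sum>T\<in>Sset l m. s T * cU T k) (\<lambda>S'. \<Sum>T\<in>Sset l m. s T * dU T S') (cR i) (dR i) = 0" for s
  proof -
    have "Bf (\<lambda>k. \<Sum>T\<in>Sset l m. s T * cU T k) (\<lambda>S'. \<Sum>T\<in>Sset l m. s T * dU T S') (cR i) (dR i)
        = (\<Sum>T\<in>Sset l m. s T * Bf (cU T) (dU T) (cR i) (dR i))" by (rule Bf_sum[OF finite_Sset])
    also have "\<dots> = 0"
    proof (intro sum.neutral ballI)
      fix T assume T: "T \<in> Sset l m"
      have "Bf (cU T) (dU T) (cR i) (dR i) = Bf (cR i) (dR i) (cU T) (dU T)" by (rule Bf_sym)
      then show "s T * Bf (cU T) (dU T) (cR i) (dR i) = 0" using orth[OF i T] by simp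
    qed
    finally show ?thesis .
  qed
  have hc: "(\<integral>\<omega>. L (cR i) (dR i) \<omega> * cos (\<Sum>T\<in>Sset l m. s T * U T \<omega>) \<partial>M) = 0" for s
    unfolding lin_U by (rule trig_orth(1)[OF orthW])
  have hs: "(\<integral>\<omega>. L (cR i) (dR i) \<omega> * sin (\<Sum>T\<in>Sset l m. s T * U T \<omega>) \<partial>M) = 0" for s
    unfolding lin_U by (rule trig_orth(2)[OF orthW])
  have "A \<in> sigma_sets (space M) (rv_sets M (Sset l m) U)" using A unfolding FF_def sets_rv_sigma .
  from KL[OF finite_Sset Um' L_int hc hs this] show ?thesis .
qed

lemma cond_exp_X:
  assumes i: "i \<in> {1..l}"
  shows "AE \<omega> in M. real_cond_exp M FF (X i) \<omega> = Y i \<omega>"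
proof -
  interpret sigma_finite_subalgebra M FF by (rule sfs)
  have XR: "X i \<omega> = Y i \<omega> + L (cR i) (dR i) \<omega>" for \<omega> using L_R[OF i] by (simp add: Y_def)
  have Xi: "integrable M (X i)"
  proof -
    have "X i = L (cX i) dZ" using L_X[OF i] by (simp add: fun_eq_iff)
    then show ?thesis using L_int by simp
  qed
  have Yi: "integrable M (Y i)"
  proof -
    have "Y i = (\<lambda>\<omega>. X i \<omega> - L (cR i) (dR i) \<omega>)" using XR by (simp add: fun_eq_iff)
    then show ?thesis using Xi L_int by simp
  qed
  have YF: "Y i \<in> borel_measurable FF"
    unfolding Y_def[abs_def] FF_def
    by (intro borel_measurable_sum borel_measurable_times borel_measurable_const meas_rv_sigma) auto
  show ?thesis
  proof (rule real_cond_exp_charact[OF _ Xi Yi YF])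
    fix A assume A: "A \<in> sets FF"
    then have AM: "A \<in> sets M" using sub_FF by (auto simp: subalgebra_def)
    have "(\<integral>\<omega>\<in>A. X i \<omega> \<partial>M) = (\<integral>\<omega>\<in>A. Y i \<omega> + L (cR i) (dR i) \<omega> \<partial>M)"
      by (simp add: XR[symmetric])
    also have "\<dots> = (\<integral>\<omega>\<in>A. Y i \<omega> \<partial>M) + (\<integral>\<omega>\<in>A. L (cR i) (dR i) \<omega> \<partial>M)"
      using integrable_mult_indicator[OF AM Yi] integrable_mult_indicator[OF AM L_int[of "cR i" "dR i"]]
      by (intro set_integral_add(2)) (simp_all add: set_integrable_def)
    finally show "(\<integral>\<omega>\<in>A. X i \<omega> \<partial>M) = (\<integral>\<omega>\<in>A. Y i \<omega> \<partial>M)" using R_set_zero[OF i A] by simp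
  qed
qed

lemma err_cov:
  assumes i: "i \<in> {1..l}" and j: "j \<in> {1..l}"
  shows "(\<integral>\<omega>. (X i \<omega> - real_cond_exp M FF (X i) \<omega>) * (X j \<omega> - real_cond_exp M FF (X j) \<omega>) \<partial>M)
     = C i j - al * (1 - \<rho>) * (if i = j then aa else bb) - al * real m * \<rho> * aa - be * (1 - \<rho>) * aa - be * real m * \<rho> * NN"
proof -
  interpret sigma_finite_subalgebra M FF by (rule sfs)
  have "(\<integral>\<omega>. (X i \<omega> - real_cond_exp M FF (X i) \<omega>) * (X j \<omega> - real_cond_exp M FF (X j) \<omega>) \<partial>M)
      = (\<integral>\<omega>. L (cR i) (dR i) \<omega> * L (cR j) (dR j) \<omega> \<partial>M)"
  proof (rule integral_cong_AE)
    show "(\<lambda>\<omega>. (X i \<omega> - real_cond_exp M FF (X i) \<omega>) * (X j \<omega> - real_cond_exp M FF (X j) \<omega>)) \<in> borel_measurable M"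
      using Xm[OF i] Xm[OF j] by measurable
    show "(\<lambda>\<omega>. L (cR i) (dR i) \<omega> * L (cR j) (dR j) \<omega>) \<in> borel_measurable M"
      using Lm by measurable
    show "AE \<omega> in M. (X i \<omega> - real_cond_exp M FF (X i) \<omega>) * (X j \<omega> - real_cond_exp M FF (X j) \<omega>)
        = L (cR i) (dR i) \<omega> * L (cR j) (dR j) \<omega>"
      using cond_exp_X[OF i] cond_exp_X[OF j]
      by eventually_elim (simp add: L_R[OF i] L_R[OF j] Y_def)
  qed
  also have "\<dots> = Bf (cR i) (dR i) (cR j) (dR j)" using L_prod by blast
  also have "\<dots> = C i j - al * (1 - \<rho>) * (if i = j then aa else bb) - al * real m * \<rho> * aa - be * (1 - \<rho>) * aa - be * real m * \<rho> * NN"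
    by (rule final_val[OF i j])
  finally show ?thesis .
qed

end

theorem proposition5:
  fixes M :: "'a measure" and l m :: nat and \<rho> \<gamma> :: real
    and X :: "nat \<Rightarrow> 'a \<Rightarrow> real" and N :: "nat set \<Rightarrow> 'a \<Rightarrow> real"
  defines "F \<equiv> sigma (space M) (rv_sets M {S. S \<subseteq> {1..l} \<and> card S = m}
                 (\<lambda>S \<omega>. (\<Sum>i\<in>S. X i \<omega>) + sqrt \<gamma> * N S \<omega>))"
    and "\<eta>1 \<equiv> cbinom (int l - 1) (int m - 1) * cbinom (int l - 2) (int m - 1) * real m
                * (1 - \<rho>) * (1 + (real l - 1) * \<rho>)"
    and "\<eta>2 \<equiv> cbinom (int l - 1) (int m - 1) * (1 + (real m - 1) * \<rho>)
              + cbinom (int l - 2) (int m - 1) * real m * (1 + (real l - 2) * \<rho>)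
              + cbinom (int l - 2) (int m - 2) * ((real l - 1) * real m * \<rho> + (real m - 1) * (1 - \<rho>))"
    and "\<eta>3 \<equiv> cbinom (int l - 1) (int m - 1) * (1 + (real m - 1) * \<rho>)
              + cbinom (int l - 2) (int m - 1) * (real l - 1) * real m * \<rho>\<^sup>2
              + cbinom (int l - 2) (int m - 2) * (real l - 1) * \<rho> * (1 + (real m - 1) * \<rho>)"
    and "\<eta>4 \<equiv> cbinom (int l - 1) (int m - 1) * \<rho> * (1 + (real m - 1) * \<rho>)
              + cbinom (int l - 2) (int m - 1) * real m * \<rho> * (1 + (real l - 2) * \<rho>)
              + cbinom (int l - 2) (int m - 2) * (1 + (real l - 2) * \<rho>) * (1 + (real m - 1) * \<rho>)"
  assumes "prob_space M"
    and "l \<ge> 2"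
    and "-1 / (real l - 1) < \<rho>" and "\<rho> < 1"
    and "1 \<le> m" and "m \<le> l"
    and "\<gamma> > 0"
    and "jointly_gaussian M {1..l} X (\<lambda>_. 0) (\<lambda>i j. if i = j then 1 else \<rho>)"
    and "\<forall>S\<in>{S. S \<subseteq> {1..l} \<and> card S = m}. distributed M lborel (N S) (normal_density 0 1)"
    and "prob_space.indep_sets M
           (\<lambda>k. sigma_sets (space M)
                  (case k of None \<Rightarrow> rv_sets M {1..l} X | Some S \<Rightarrow> rv_sets M {S} N))
           (insert None (Some ` {S. S \<subseteq> {1..l} \<and> card S = m}))"
  shows "(\<forall>i\<in>{1..l}.
           integral\<^sup>L M (\<lambda>\<omega>. (X i \<omega> - real_cond_exp M F (X i) \<omega>) * (X i \<omega> - real_cond_exp M F (X i) \<omega>))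
             = 1 - (\<eta>3 * \<gamma> + \<eta>1) / (\<gamma>\<^sup>2 + \<eta>2 * \<gamma> + \<eta>1)) \<and>
         (\<forall>i\<in>{1..l}. \<forall>j\<in>{1..l}. i \<noteq> j \<longrightarrow>
           integral\<^sup>L M (\<lambda>\<omega>. (X i \<omega> - real_cond_exp M F (X i) \<omega>) * (X j \<omega> - real_cond_exp M F (X j) \<omega>))
             = \<rho> - (\<eta>4 * \<gamma> + \<eta>1 * \<rho>) / (\<gamma>\<^sup>2 + \<eta>2 * \<gamma> + \<eta>1))"
proof -
  interpret gset2 M l m \<rho> X N \<gamma>
  proof (intro gset2.intro gset.intro gset_axioms.intro gset2_axioms.intro)
    show "prob_space M" using assms(6) .
  qed (use assms in auto)
  have F_eq: "F = FF" unfolding F_def FF_def Sset_def U_def[abs_def] ..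
  have e1: "\<eta>1 = aa * cc * real m * (1 - \<rho>) * (1 + (real l - 1) * \<rho>)"
    unfolding \<eta>1_def cb1 cb2 ..
  have e2: "\<eta>2 = aa * (1 + (real m - 1) * \<rho>) + cc * real m * (1 + (real l - 2) * \<rho>) + bb * ((real l - 1) * real m * \<rho> + (real m - 1) * (1 - \<rho>))"
    unfolding \<eta>2_def cb1 cb2 cb3 ..
  have e3: "\<eta>3 = aa * (1 + (real m - 1) * \<rho>) + cc * (real l - 1) * real m * \<rho>\<^sup>2 + bb * (real l - 1) * \<rho> * (1 + (real m - 1) * \<rho>)"
    unfolding \<eta>3_def cb1 cb2 cb3 ..
  have e4: "\<eta>4 = aa * \<rho> * (1 + (real m - 1) * \<rho>) + cc * real m * \<rho> * (1 + (real l - 2) * \<rho>) + bb * (1 + (real l - 2) * \<rho>) * (1 + (real m - 1) * \<rho>)"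
    unfolding \<eta>4_def cb1 cb2 cb3 ..
  have hyps: "bb + cc = aa" "(real l - 1) * bb = (real m - 1) * aa" "real l * aa = real m * NN"
    "real l \<ge> 2" "real m \<ge> 1" "1 + (real l - 1) * \<rho> > 0" "\<rho> < 1" "\<gamma> > 0" "aa > 0" "cc \<ge> 0"
    using rel_bl rel_la l2 m1 rl rhi gpos aa_pos cc_nonneg by (auto simp: cc_def)
  note fa = final_algebra[OF hyps]
  show ?thesis
  proof (intro conjI ballI impI)
    fix i assume i: "i \<in> {1..l}"
    show "integral\<^sup>L M (\<lambda>\<omega>. (X i \<omega> - real_cond_exp M F (X i) \<omega>) * (X i \<omega> - real_cond_exp M F (X i) \<omega>))
             = 1 - (\<eta>3 * \<gamma> + \<eta>1) / (\<gamma>\<^sup>2 + \<eta>2 * \<gamma> + \<eta>1)"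
      unfolding F_eq err_cov[OF i i] e1 e2 e3 using fa(1) by (simp add: C_def al_def be_def)
  next
    fix i j assume i: "i \<in> {1..l}" and j: "j \<in> {1..l}" and ij: "i \<noteq> j"
    show "integral\<^sup>L M (\<lambda>\<omega>. (X i \<omega> - real_cond_exp M F (X i) \<omega>) * (X j \<omega> - real_cond_exp M F (X j) \<omega>))
             = \<rho> - (\<eta>4 * \<gamma> + \<eta>1 * \<rho>) / (\<gamma>\<^sup>2 + \<eta>2 * \<gamma> + \<eta>1)"
      unfolding F_eq err_cov[OF i j] e1 e2 e4 using fa(2) ij by (simp add: C_def al_def be_def)
  qed
qed

end
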